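(* Consider the FlexGT/Acc-FlexGT recursion in the context, and suppose (C) (with some $\mu\ge0$), (S), (V), (G) hold and $x^*$ is a minimizer of $f$. If $\gamma\le\frac{1}{4\beta L}$, then for all $k\ge0$, $$\mathbb{E}\|\bar x_{\beta(k+1)}-x^*\|^2\le\Big(1-\frac{\mu\beta\gamma}{2}\Big)\mathbb{E}\|\bar x_{\beta k}-x^*\|^2+\frac{\gamma^2\beta\sigma^2}{n}+\frac{3\gamma\beta L}{n}\mathbb{E}\|\tilde{\mathbf x}_{\beta k}\|^2-\gamma\beta\,\mathbb{E}\big[f(\bar x_{\beta k})-f(x^* )\big].$$
   Context: Problem: $n$ nodes, each with $f_i(x)=\mathbb{E}_{\xi_i\sim\mathcal D_i}[f_i(x;\xi_i)]$ on $\mathbb{R}^p$, $f=\frac1n\sum_i f_i$. Stochastic oracle: unbiased $\nabla f_i(x;\xi_i)$, independent samples across nodes and iterations. Assumptions: (C) for each $i$, $f_i(x')-f_i(x)\ge\langle\nabla f_i(x),x'-x\rangle+\frac{\mu}{2}\|x'-x\|^2$, $\mu\ge0$. (S) each $f_i$ has $L$-Lipschitz gradient. (V) $\mathbb{E}\|\nabla f_i(x;\xi_i)-\nabla f_i(x)\|^2\le\sigma^2$. (G) $W$ doubly stochastic, $\rho_W:=\|W-\mathbf J\|_2^2<1$, $\mathbf J=\mathbf 1\mathbf 1^\top/n$. Algorithm: integers $\alpha,\beta\ge1$, stepsize $\gamma>0$; $\bar W=W^\alpha$ (FlexGT) or $\bar W=M_\alpha$ (Acc-FlexGT) with $M_{-1}=M_0=I$,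 $M_{s+1}=(1+\eta)WM_s-\eta M_{s-1}$, $\eta=\frac{1-\sqrt{1-\rho_W}}{1+\sqrt{1-\rho_W}}$ (in either case $\bar W$ is doubly stochastic). Iterates $\mathbf x_t,\mathbf y_t\in\mathbb{R}^{n\times p}$; snapshot $\mathbf z_t=\mathbf x_{\beta\lfloor t/\beta\rfloor}$; $\nabla G_t$ has rows $\nabla f_i(z_{i,t};\xi_{i,t})$ with fresh samples. $\mathbf y_0=\nabla G_0$. For round $k\ge0$, $j=0,\dots,\beta-2$: $\mathbf x_{\beta k+j+1}=\mathbf x_{\beta k+j}-\gamma\mathbf y_{\beta k+j}$, $\mathbf y_{\beta k+j+1}=\mathbf y_{\beta k+j}+\nabla G_{\beta k+j+1}-\nabla G_{\beta k+j}$; round end: $\mathbf x_{\beta(k+1)}=\bar W(\mathbf x_{\beta k}-\gamma\sum_{j=0}^{\beta-1}\mathbf y_{\beta k+j})$, $\mathbf y_{\beta(k+1)}=\bar W(\mathbf y_{\beta k}+\nabla G_{\beta(k+1)}-\nabla G_{\beta k})$. Notation: $\|\cdot\|$ Euclidean/Frobenius; $\bar x_t=\mathbf 1^\top\mathbf x_t/n$, $\tilde{\mathbf x}_t=\mathbf x_t-\mathbf 1\bar x_t$. *)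

theory Defs
  imports "HOL-Probability.Probability"
begin

text \<open>Nodes are indexed by a finite type 'n (so n = CARD('n)); points live in a
Euclidean space 'a (standing for R^p). Stacked iterates are functions 'n => 'a
(row i = local variable of node i).\<close>

definition avg_mat :: "real^'n^'n" where
  "avg_mat = (\<chi> i j. 1 / real CARD('n::finite))"

definition doubly_stochastic :: "real^'n::finite^'n \<Rightarrow> bool" where
  "doubly_stochastic W \<longleftrightarrow> (\<forall>i j. W$i$j \<ge> 0) \<and> (\<forall>i. (\<Sum>j\<in>UNIV. W$i$j) = 1)
     \<and> (\<forall>j. (\<Sum>i\<in>UNIV. W$i$j) = 1)"

text \<open>rho_W = ||W - J||_2^2 (spectral norm = operator norm w.r.t. Euclidean norm).\<close>
definition rhoW :: "real^'n::finite^'n \<Rightarrow> real" where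
  "rhoW W = (onorm (\<lambda>v. (W - avg_mat) *v v))\<^sup>2"

fun mat_pow :: "real^'n::finite^'n \<Rightarrow> nat \<Rightarrow> real^'n^'n" where
  "mat_pow W 0 = mat 1"
| "mat_pow W (Suc m) = W ** mat_pow W m"

definition cheb_eta :: "real^'n::finite^'n \<Rightarrow> real" where
  "cheb_eta W = (1 - sqrt (1 - rhoW W)) / (1 + sqrt (1 - rhoW W))"

text \<open>Chebyshev acceleration: M_{-1} = M_0 = I, M_{s+1} = (1+eta) W M_s - eta M_{s-1}.\<close>
fun acc_M :: "real^'n::finite^'n \<Rightarrow> nat \<Rightarrow> real^'n^'n" where
  "acc_M W 0 = mat 1"
| "acc_M W (Suc 0) = (1 + cheb_eta W) *\<^sub>R (W ** mat 1) - cheb_eta W *\<^sub>R mat 1"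
| "acc_M W (Suc (Suc s)) = (1 + cheb_eta W) *\<^sub>R (W ** acc_M W (Suc s)) - cheb_eta W *\<^sub>R acc_M W s"

definition Wbar :: "bool \<Rightarrow> real^'n::finite^'n \<Rightarrow> nat \<Rightarrow> real^'n^'n" where
  "Wbar acc W \<alpha> = (if acc then acc_M W \<alpha> else mat_pow W \<alpha>)"

definition mix :: "real^'n::finite^'n \<Rightarrow> ('n \<Rightarrow> 'a::real_vector) \<Rightarrow> ('n \<Rightarrow> 'a)" where
  "mix A X = (\<lambda>i. \<Sum>j\<in>UNIV. A$i$j *\<^sub>R X j)"

text \<open>Stacked stochastic gradient nabla G_t: row i is g i (z_{i,t}) (xi_{i,t}), with
xi_{i,t} = omega (i,t).\<close>
definition gradG :: "('n \<Rightarrow> 'a \<Rightarrow> 's \<Rightarrow> 'a) \<Rightarrow> ('n \<Rightarrow> 'a) \<Rightarrow> ('n \<times> nat \<Rightarrow> 's) \<Rightarrow> nat \<Rightarrow> ('n \<Rightarrow> 'a)" where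
  "gradG g z \<omega> t = (\<lambda>i. g i (z i) (\<omega> (i, t)))"

text \<open>State at time t: (x_t, y_t, z_t, S_t) where z_t = x_{beta*floor(t/beta)} is the snapshot
and S_t = sum of y_s for s from beta*floor(t/beta) to t (running sum of the current round).\<close>
fun flexgt :: "real^'n::finite^'n \<Rightarrow> real \<Rightarrow> nat \<Rightarrow> ('n \<Rightarrow> 'a::real_vector \<Rightarrow> 's \<Rightarrow> 'a)
    \<Rightarrow> ('n \<Rightarrow> 'a) \<Rightarrow> ('n \<times> nat \<Rightarrow> 's) \<Rightarrow> nat
    \<Rightarrow> ('n \<Rightarrow> 'a) \<times> ('n \<Rightarrow> 'a) \<times> ('n \<Rightarrow> 'a) \<times> ('n \<Rightarrow> 'a)" where
  "flexgt Wb \<gamma> \<beta> g x0 \<omega> 0 = (x0, gradG g x0 \<omega> 0, x0, gradG g x0 \<omega> 0)"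
| "flexgt Wb \<gamma> \<beta> g x0 \<omega> (Suc t) =
    (let (x, y, z, S) = flexgt Wb \<gamma> \<beta> g x0 \<omega> t;
         Gt = gradG g z \<omega> t in
     if \<beta> dvd Suc t then
       (let x' = mix Wb (\<lambda>i. z i - \<gamma> *\<^sub>R S i);
            G' = gradG g x' \<omega> (Suc t);
            y' = mix Wb (\<lambda>i. y i + G' i - Gt i)
        in (x', y', x', y'))
     else
       (let x' = (\<lambda>i. x i - \<gamma> *\<^sub>R y i);
            G' = gradG g z \<omega> (Suc t);
            y' = (\<lambda>i. y i + G' i - Gt i)
        in (x', y', z, (\<lambda>i. S i + y' i))))"

definition xit :: "real^'n::finite^'n \<Rightarrow> real \<Rightarrow> nat \<Rightarrow> ('n \<Rightarrow> 'a::real_vector \<Rightarrow> 's \<Rightarrow> 'a)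
    \<Rightarrow> ('n \<Rightarrow> 'a) \<Rightarrow> ('n \<times> nat \<Rightarrow> 's) \<Rightarrow> nat \<Rightarrow> ('n \<Rightarrow> 'a)" where
  "xit Wb \<gamma> \<beta> g x0 \<omega> t = fst (flexgt Wb \<gamma> \<beta> g x0 \<omega> t)"

definition node_avg :: "('n::finite \<Rightarrow> 'a::real_vector) \<Rightarrow> 'a" where
  "node_avg X = (1 / real CARD('n)) *\<^sub>R (\<Sum>i\<in>UNIV. X i)"

definition consensus_err :: "('n::finite \<Rightarrow> 'a::real_normed_vector) \<Rightarrow> real" where
  "consensus_err X = (\<Sum>i\<in>UNIV. (norm (X i - node_avg X))\<^sup>2)"

end

theory Submission
  imports Defs
begin

definition colsum1 :: "real^'n::finite^'n \<Rightarrow> bool" where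
  "colsum1 A \<longleftrightarrow> (\<forall>j. (\<Sum>i\<in>UNIV. A$i$j) = 1)"

lemma colsum1_mat1: "colsum1 (mat 1 :: real^'n::finite^'n)"
  unfolding colsum1_def by (simp add: mat_def if_distrib sum.delta)

lemma colsum1_mult:
  assumes "colsum1 A" "colsum1 B" shows "colsum1 (A ** B)"
proof -
  have "(\<Sum>i\<in>UNIV. (A ** B)$i$j) = 1" for j
  proof -
    have "(\<Sum>i\<in>UNIV. (A ** B)$i$j) = (\<Sum>i\<in>UNIV. \<Sum>l\<in>UNIV. A$i$l * B$l$j)"
      by (simp add: matrix_matrix_mult_def)
    also have "\<dots> = (\<Sum>l\<in>UNIV. (\<Sum>i\<in>UNIV. A$i$l) * B$l$j)"
      by (subst sum.swap) (simp add: sum_distrib_right)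
    also have "\<dots> = 1" using assms by (simp add: colsum1_def)
    finally show ?thesis .
  qed
  then show ?thesis by (simp add: colsum1_def)
qed

lemma colsum1_comb:
  assumes "colsum1 A" "colsum1 B" shows "colsum1 ((1 + e) *\<^sub>R A - e *\<^sub>R B)"
  using assms by (simp add: colsum1_def sum_subtractf sum_distrib_left[symmetric])

lemma colsum1_W: "doubly_stochastic W \<Longrightarrow> colsum1 W"
  by (simp add: doubly_stochastic_def colsum1_def)

lemma colsum1_mat_pow: "colsum1 W \<Longrightarrow> colsum1 (mat_pow W m)"
  by (induction m) (auto intro: colsum1_mult colsum1_mat1)

lemma colsum1_acc_M: "colsum1 W \<Longrightarrow> colsum1 (acc_M W m)"
  by (induction W m rule: acc_M.induct) (auto intro!: colsum1_mult colsum1_mat1 colsum1_comb)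

lemma colsum1_Wbar: "doubly_stochastic W \<Longrightarrow> colsum1 (Wbar acc W a)"
  by (simp add: Wbar_def colsum1_W colsum1_mat_pow colsum1_acc_M)

lemma node_avg_mix:
  fixes X :: "'n::finite \<Rightarrow> 'a::real_vector"
  assumes "colsum1 A" shows "node_avg (mix A X) = node_avg X"
proof -
  have "(\<Sum>i\<in>UNIV. \<Sum>j\<in>UNIV. A$i$j *\<^sub>R X j) = (\<Sum>j\<in>UNIV. (\<Sum>i\<in>UNIV. A$i$j) *\<^sub>R X j)"
    by (subst sum.swap) (simp add: scaleR_sum_left)
  also have "\<dots> = (\<Sum>j\<in>UNIV. X j)" using assms by (simp add: colsum1_def)
  finally show ?thesis by (simp add: node_avg_def mix_def)
qed

lemma node_avg_add: "node_avg (\<lambda>i. X i + Y i) = node_avg X + node_avg Y"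
  by (simp add: node_avg_def sum.distrib scaleR_add_right)
lemma node_avg_diff: "node_avg (\<lambda>i. X i - Y i) = node_avg X - node_avg Y"
  by (simp add: node_avg_def sum_subtractf scaleR_diff_right)
lemma node_avg_scale: "node_avg (\<lambda>i. c *\<^sub>R X i) = c *\<^sub>R node_avg X"
  by (simp add: node_avg_def scaleR_sum_right[symmetric])
lemma node_avg_sum: "finite S \<Longrightarrow> node_avg (\<lambda>i. \<Sum>s\<in>S. X s i) = (\<Sum>s\<in>S. node_avg (X s))"
  by (simp add: node_avg_def scaleR_sum_right sum.swap[of _ S])


lemma flexgt_step:
  assumes "flexgt Wb \<gamma> \<beta> g x0 \<omega> t = (x, y, z, S)"
  shows "flexgt Wb \<gamma> \<beta> g x0 \<omega> (Suc t) =
    (if \<beta> dvd Suc t then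
       (let x' = mix Wb (\<lambda>i. z i - \<gamma> *\<^sub>R S i);
            y' = mix Wb (\<lambda>i. y i + gradG g x' \<omega> (Suc t) i - gradG g z \<omega> t i)
        in (x', y', x', y'))
     else
       (let x' = (\<lambda>i. x i - \<gamma> *\<^sub>R y i);
            y' = (\<lambda>i. y i + gradG g z \<omega> (Suc t) i - gradG g z \<omega> t i)
        in (x', y', z, (\<lambda>i. S i + y' i))))"
  using assms by (simp add: Let_def)

lemma flexgt_avg_y:
  assumes "colsum1 Wb"
  shows "flexgt Wb \<gamma> \<beta> g x0 \<omega> t = (x, y, z, S) \<Longrightarrow> node_avg y = node_avg (gradG g z \<omega> t)"
proof (induction t arbitrary: x y z S)
  case 0 then show ?case by auto
next
  case (Suc t)
  obtain x1 y1 z1 S1 where e: "flexgt Wb \<gamma> \<beta> g x0 \<omega> t = (x1, y1, z1, S1)" by (cases "flexgt Wb \<gamma> \<beta> g x0 \<omega> t") auto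
  note IH = Suc.IH[OF e]
  show ?case
  proof (cases "\<beta> dvd Suc t")
    case True
    with Suc.prems flexgt_step[OF e] show ?thesis
      by (simp add: Let_def node_avg_mix[OF assms] node_avg_add node_avg_diff IH)
  next
    case False
    with Suc.prems flexgt_step[OF e] show ?thesis
      by (auto simp add: Let_def node_avg_add node_avg_diff IH)
  qed
qed

lemma flexgt_dvd:
  "\<beta> dvd t \<Longrightarrow> flexgt Wb \<gamma> \<beta> g x0 \<omega> t = (x, y, z, S) \<Longrightarrow> z = x \<and> S = y"
proof (cases t)
  case 0 then show "flexgt Wb \<gamma> \<beta> g x0 \<omega> t = (x, y, z, S) \<Longrightarrow> z = x \<and> S = y" by auto
next
  case (Suc t')
  assume d: "\<beta> dvd t" and h: "flexgt Wb \<gamma> \<beta> g x0 \<omega> t = (x, y, z, S)"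
  obtain x1 y1 z1 S1 where e: "flexgt Wb \<gamma> \<beta> g x0 \<omega> t' = (x1, y1, z1, S1)" by (cases "flexgt Wb \<gamma> \<beta> g x0 \<omega> t'") auto
  from h d flexgt_step[OF e] Suc show ?thesis by (auto simp: Let_def)
qed

lemma flexgt_round:
  assumes "j < \<beta>" "flexgt Wb \<gamma> \<beta> g x0 \<omega> (\<beta> * k) = (x0', y0', z0', S0')"
  shows "\<exists>x y S. flexgt Wb \<gamma> \<beta> g x0 \<omega> (\<beta> * k + j) = (x, y, z0', S) \<and>
     node_avg S = (\<Sum>l\<le>j. node_avg (fst (snd (flexgt Wb \<gamma> \<beta> g x0 \<omega> (\<beta> * k + l)))))"
  using assms(1)
proof (induction j)
  case 0
  have "z0' = x0' \<and> S0' = y0'" using flexgt_dvd[OF _ assms(2)] by simp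
  then show ?case using assms(2) by simp
next
  case (Suc j)
  then obtain x y S where e: "flexgt Wb \<gamma> \<beta> g x0 \<omega> (\<beta> * k + j) = (x, y, z0', S)"
     and s: "node_avg S = (\<Sum>l\<le>j. node_avg (fst (snd (flexgt Wb \<gamma> \<beta> g x0 \<omega> (\<beta> * k + l)))))"
    by auto
  have nd: "\<not> \<beta> dvd Suc (\<beta> * k + j)"
  proof
    assume "\<beta> dvd Suc (\<beta> * k + j)"
    then have "\<beta> dvd Suc j" using dvd_add_right_iff[of \<beta> "\<beta> * k" "Suc j"] by (simp add: add_Suc_right[symmetric] del: add_Suc_right)
    with Suc.prems show False by (auto dest: dvd_imp_le)
  qed
  have st: "flexgt Wb \<gamma> \<beta> g x0 \<omega> (\<beta> * k + Suc j) = flexgt Wb \<gamma> \<beta> g x0 \<omega> (Suc (\<beta> * k + j))" by simp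
  show ?case using flexgt_step[OF e] nd s
    by (simp only: st) (simp add: Let_def node_avg_add)
qed


lemma flexgt_avg_next:
  assumes cs: "colsum1 Wb" and b: "\<beta> \<ge> 1"
  shows "node_avg (xit Wb \<gamma> \<beta> g x0 \<omega> (\<beta> * (k + 1))) = node_avg (xit Wb \<gamma> \<beta> g x0 \<omega> (\<beta> * k))
     - \<gamma> *\<^sub>R (\<Sum>l<\<beta>. node_avg (gradG g (xit Wb \<gamma> \<beta> g x0 \<omega> (\<beta> * k)) \<omega> (\<beta> * k + l)))"
proof -
  obtain x0' y0' z0' S0' where e0: "flexgt Wb \<gamma> \<beta> g x0 \<omega> (\<beta> * k) = (x0', y0', z0', S0')"
    by (cases "flexgt Wb \<gamma> \<beta> g x0 \<omega> (\<beta> * k)") auto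
  have zx: "z0' = x0'" using flexgt_dvd[OF _ e0] by simp
  have yl: "node_avg (fst (snd (flexgt Wb \<gamma> \<beta> g x0 \<omega> (\<beta> * k + l)))) =
      node_avg (gradG g x0' \<omega> (\<beta> * k + l))" if lb: "l < \<beta>" for l
  proof -
    obtain x y S where "flexgt Wb \<gamma> \<beta> g x0 \<omega> (\<beta> * k + l) = (x, y, z0', S)"
      using flexgt_round[OF lb e0] by auto
    with flexgt_avg_y[OF cs this] zx show ?thesis by simp
  qed
  obtain x y S where e1: "flexgt Wb \<gamma> \<beta> g x0 \<omega> (\<beta> * k + (\<beta> - 1)) = (x, y, z0', S)"
     and s: "node_avg S = (\<Sum>l\<le>\<beta> - 1. node_avg (fst (snd (flexgt Wb \<gamma> \<beta> g x0 \<omega> (\<beta> * k + l)))))"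
    using flexgt_round[OF _ e0, of "\<beta> - 1"] b by auto
  have s2: "node_avg S = (\<Sum>l<\<beta>. node_avg (gradG g x0' \<omega> (\<beta> * k + l)))"
  proof -
    have "{..\<beta> - 1} = {..<\<beta>}" using b by auto
    then show ?thesis using s yl by simp
  qed
  have eq: "\<beta> * (k + 1) = Suc (\<beta> * k + (\<beta> - 1))" using b by simp
  have "xit Wb \<gamma> \<beta> g x0 \<omega> (\<beta> * (k + 1)) = mix Wb (\<lambda>i. z0' i - \<gamma> *\<^sub>R S i)"
  proof -
    have d: "\<beta> dvd Suc (\<beta> * k + (\<beta> - 1))" unfolding eq[symmetric] by simp
    have "flexgt Wb \<gamma> \<beta> g x0 \<omega> (\<beta> * (k + 1)) = flexgt Wb \<gamma> \<beta> g x0 \<omega> (Suc (\<beta> * k + (\<beta> - 1)))"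
      by (simp only: eq)
    also have "\<dots> = (let x' = mix Wb (\<lambda>i. z0' i - \<gamma> *\<^sub>R S i);
            y' = mix Wb (\<lambda>i. y i + gradG g x' \<omega> (Suc (\<beta> * k + (\<beta> - 1))) i - gradG g z0' \<omega> (\<beta> * k + (\<beta> - 1)) i)
        in (x', y', x', y'))" using flexgt_step[OF e1] d by simp
    finally show ?thesis by (simp add: xit_def Let_def)
  qed
  then show ?thesis
    using e0 zx s2 by (simp add: xit_def node_avg_mix[OF cs] node_avg_diff node_avg_scale)
qed


lemma flexgt_dep:
  "(\<And>i s. s \<le> t \<Longrightarrow> \<omega> (i, s) = \<omega>' (i, s)) \<Longrightarrow> flexgt Wb \<gamma> \<beta> g x0 \<omega> t = flexgt Wb \<gamma> \<beta> g x0 \<omega>' t"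
proof (induction t)
  case 0 then show ?case by (simp add: gradG_def)
next
  case (Suc t)
  have e: "flexgt Wb \<gamma> \<beta> g x0 \<omega> t = flexgt Wb \<gamma> \<beta> g x0 \<omega>' t" using Suc by simp
  have gs: "\<And>z s. s \<le> Suc t \<Longrightarrow> gradG g z \<omega> s = gradG g z \<omega>' s" using Suc.prems by (simp add: gradG_def)
  show ?case using e gs[of t] gs[of "Suc t"] by (simp add: Let_def split: prod.split)
qed

lemma xit_dep:
  "(\<And>i s. s < t \<Longrightarrow> \<omega> (i, s) = \<omega>' (i, s)) \<Longrightarrow> xit Wb \<gamma> \<beta> g x0 \<omega> t = xit Wb \<gamma> \<beta> g x0 \<omega>' t"
proof (cases t)
  case 0 then show ?thesis by (simp add: xit_def)
next
  case (Suc t')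
  assume h: "\<And>i s. s < t \<Longrightarrow> \<omega> (i, s) = \<omega>' (i, s)"
  have e: "flexgt Wb \<gamma> \<beta> g x0 \<omega> t' = flexgt Wb \<gamma> \<beta> g x0 \<omega>' t'"
    by (rule flexgt_dep) (use h Suc in auto)
  show ?thesis using e Suc by (simp add: xit_def Let_def split: prod.split)
qed


lemma descent:
  fixes f :: "'a::euclidean_space \<Rightarrow> real"
  assumes grad: "\<And>x. (f has_derivative (\<lambda>h. df x \<bullet> h)) (at x)"
    and smooth: "\<And>x y. norm (df x - df y) \<le> L * norm (x - y)"
  shows "f y \<le> f x + df x \<bullet> (y - x) + L / 2 * (norm (y - x))\<^sup>2"
proof -
  define d where "d = y - x"
  define \<phi> where "\<phi> t = f (x + t *\<^sub>R d) - t * (df x \<bullet> d) - L / 2 * t\<^sup>2 * (norm d)\<^sup>2" for t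
  have der: "(\<phi> has_real_derivative (df (x + t *\<^sub>R d) \<bullet> d - df x \<bullet> d - L * t * (norm d)\<^sup>2)) (at t)" for t
  proof -
    have l: "((\<lambda>t. x + t *\<^sub>R d) has_derivative (\<lambda>h. h *\<^sub>R d)) (at t)"
      by (auto intro!: derivative_eq_intros)
    have c: "((\<lambda>t. f (x + t *\<^sub>R d)) has_derivative (\<lambda>h. df (x + t *\<^sub>R d) \<bullet> (h *\<^sub>R d))) (at t)"
      using has_derivative_compose[OF l grad] by simp
    have c': "((\<lambda>t. f (x + t *\<^sub>R d)) has_real_derivative (df (x + t *\<^sub>R d) \<bullet> d)) (at t)"
    proof -
      have e: "(\<lambda>h. h * D) = (*) D" for D :: real by (rule ext) (simp add: mult.commute)
      show ?thesis unfolding has_field_derivative_def using c by (simp add: e)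
    qed
    show ?thesis unfolding \<phi>_def
      by (rule derivative_eq_intros c' refl)+ (simp add: power2_eq_square)
  qed
  have nonpos: "df (x + t *\<^sub>R d) \<bullet> d - df x \<bullet> d - L * t * (norm d)\<^sup>2 \<le> 0" if "0 \<le> t" for t
  proof -
    have "df (x + t *\<^sub>R d) \<bullet> d - df x \<bullet> d = (df (x + t *\<^sub>R d) - df x) \<bullet> d" by (simp add: inner_diff_left)
    also have "\<dots> \<le> norm (df (x + t *\<^sub>R d) - df x) * norm d" by (rule norm_cauchy_schwarz)
    also have "\<dots> \<le> (L * norm (t *\<^sub>R d)) * norm d"
      using smooth[of "x + t *\<^sub>R d" x] by (intro mult_right_mono) auto
    also have "\<dots> = L * t * (norm d)\<^sup>2" using that by (simp add: power2_eq_square)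
    finally show ?thesis by simp
  qed
  have "\<phi> 1 \<le> \<phi> 0"
  proof (rule DERIV_nonpos_imp_nonincreasing[of 0 1])
    fix t :: real assume "0 \<le> t" "t \<le> 1"
    then show "\<exists>y. (\<phi> has_real_derivative y) (at t) \<and> y \<le> 0" using der[of t] nonpos[of t] by blast
  qed simp
  then show ?thesis unfolding \<phi>_def d_def by (simp add: algebra_simps)
qed


lemma norm_sum_sq_le:
  fixes v :: "'n::finite \<Rightarrow> 'a::real_normed_vector"
  shows "(norm (\<Sum>i\<in>UNIV. v i))\<^sup>2 \<le> real CARD('n) * (\<Sum>i\<in>UNIV. (norm (v i))\<^sup>2)"
proof -
  have "norm (\<Sum>i\<in>UNIV. v i) \<le> (\<Sum>i\<in>UNIV. norm (v i))" by (rule norm_sum)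
  then have "(norm (\<Sum>i\<in>UNIV. v i))\<^sup>2 \<le> (\<Sum>i\<in>UNIV. norm (v i))\<^sup>2"
    by (intro power_mono) auto
  also have "\<dots> \<le> (\<Sum>i\<in>UNIV. (norm (v i))\<^sup>2) * card (UNIV :: 'n set)"
    by (rule sum_squared_le_sum_of_squares)
  finally show ?thesis by (simp add: mult.commute)
qed

lemma norm_add_sq: "(norm (a + b))\<^sup>2 = (norm a)\<^sup>2 + 2 * (a \<bullet> b) + (norm (b::'a::real_inner))\<^sup>2"
  using dot_norm[of a b] by simp

lemma norm_diff_sq: "(norm (a - b))\<^sup>2 = (norm a)\<^sup>2 - 2 * (a \<bullet> b) + (norm (b::'a::real_inner))\<^sup>2"
  using norm_add_sq[of a "- b"] by simp

lemma sum_norm_sq_split: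
  fixes x :: "'n::finite \<Rightarrow> 'a::real_inner"
  shows "(\<Sum>i\<in>UNIV. (norm (x i - c))\<^sup>2) = consensus_err x + real CARD('n) * (norm (node_avg x - c))\<^sup>2"
proof -
  let ?m = "node_avg x"
  have s0: "(\<Sum>i\<in>UNIV. x i - ?m) = 0"
    by (simp add: sum_subtractf node_avg_def sum_constant_scaleR scaleR_scaleR)
  have "(\<Sum>i\<in>UNIV. (norm (x i - c))\<^sup>2) = (\<Sum>i\<in>UNIV. (norm (x i - ?m))\<^sup>2 + 2 * ((x i - ?m) \<bullet> (?m - c)) + (norm (?m - c))\<^sup>2)"
  proof (rule sum.cong[OF refl])
    fix i
    have "x i - c = (x i - ?m) + (?m - c)" by simp
    then show "(norm (x i - c))\<^sup>2 = (norm (x i - ?m))\<^sup>2 + 2 * ((x i - ?m) \<bullet> (?m - c)) + (norm (?m - c))\<^sup>2"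
      by (metis norm_add_sq)
  qed
  also have "\<dots> = consensus_err x + 2 * ((\<Sum>i\<in>UNIV. x i - ?m) \<bullet> (?m - c)) + real CARD('n) * (norm (?m - c))\<^sup>2"
    by (simp add: sum.distrib consensus_err_def inner_sum_left sum_distrib_left)
  finally show ?thesis using s0 by simp
qed


lemma det_bound:
  fixes f :: "'n::finite \<Rightarrow> 'a::euclidean_space \<Rightarrow> real"
    and df :: "'n \<Rightarrow> 'a \<Rightarrow> 'a" and x :: "'n \<Rightarrow> 'a"
  defines "F \<equiv> (\<lambda>y. (1 / real CARD('n)) * (\<Sum>i\<in>UNIV. f i y))"
  assumes grad: "\<And>i x. (f i has_derivative (\<lambda>h. df i x \<bullet> h)) (at x)"
    and mu: "\<mu> \<ge> 0"
    and sc: "\<And>i x x'. f i x' - f i x \<ge> df i x \<bullet> (x' - x) + \<mu> / 2 * (norm (x' - x))\<^sup>2"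
    and smooth: "\<And>i x y. norm (df i x - df i y) \<le> L * norm (x - y)"
    and minimizer: "\<And>y. F xs \<le> F y"
    and L: "L > 0" and a: "a > 0" "a * L \<le> 1 / 4"
  shows "(norm (node_avg x - xs - a *\<^sub>R node_avg (\<lambda>i. df i (x i))))\<^sup>2
    \<le> (1 - \<mu> * a / 2) * (norm (node_avg x - xs))\<^sup>2 + 3 * a * L / real CARD('n) * consensus_err x
       - a * (F (node_avg x) - F xs)"
proof -
  define N where "N = real CARD('n)"
  have N: "N > 0" by (simp add: N_def)
  define xb where "xb = node_avg x"
  define c where "c = xb - xs"
  define h where "h = node_avg (\<lambda>i. df i (x i))"
  define G where "G = node_avg (\<lambda>i. df i xb)"
  define C where "C = consensus_err x"
  define \<Delta> where "\<Delta> = F xb - F xs"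
  have C0: "C \<ge> 0" by (simp add: C_def consensus_err_def sum_nonneg)
  have D0: "\<Delta> \<ge> 0" using minimizer[of xb] by (simp add: \<Delta>_def)
  have Cdef: "C = (\<Sum>i\<in>UNIV. (norm (x i - xb))\<^sup>2)" by (simp add: C_def consensus_err_def xb_def)
  have per_i: "df i (x i) \<bullet> c \<ge> f i xb - f i xs - L / 2 * (norm (x i - xb))\<^sup>2 + \<mu> / 2 * (norm (x i - xs))\<^sup>2" for i
  proof -
    have s: "f i xs - f i (x i) \<ge> df i (x i) \<bullet> (xs - x i) + \<mu> / 2 * (norm (xs - x i))\<^sup>2" by (rule sc)
    have d: "f i xb \<le> f i (x i) + df i (x i) \<bullet> (xb - x i) + L / 2 * (norm (xb - x i))\<^sup>2"
      by (rule descent[OF grad smooth])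
    have e: "df i (x i) \<bullet> c = df i (x i) \<bullet> (xb - x i) - df i (x i) \<bullet> (xs - x i)"
      by (simp add: c_def inner_diff_right)
    have n1: "norm (xs - x i) = norm (x i - xs)" by (rule norm_minus_commute)
    have n2: "norm (xb - x i) = norm (x i - xb)" by (rule norm_minus_commute)
    show ?thesis using s d e n1 n2 by simp
  qed
  have hc: "h \<bullet> c = (1 / N) * (\<Sum>i\<in>UNIV. df i (x i) \<bullet> c)"
    by (simp add: h_def node_avg_def N_def inner_sum_left)
  have sum1: "(\<Sum>i\<in>UNIV. df i (x i) \<bullet> c) \<ge> (\<Sum>i\<in>UNIV. f i xb - f i xs - L / 2 * (norm (x i - xb))\<^sup>2 + \<mu> / 2 * (norm (x i - xs))\<^sup>2)"
    by (rule sum_mono) (rule per_i)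
  have sum2: "(\<Sum>i\<in>UNIV. f i xb - f i xs - L / 2 * (norm (x i - xb))\<^sup>2 + \<mu> / 2 * (norm (x i - xs))\<^sup>2)
      = N * \<Delta> - L / 2 * C + \<mu> / 2 * (C + N * (norm c)\<^sup>2)"
  proof -
    have e1: "(\<Sum>i\<in>UNIV. f i xb - f i xs - L / 2 * (norm (x i - xb))\<^sup>2 + \<mu> / 2 * (norm (x i - xs))\<^sup>2)
      = (\<Sum>i\<in>UNIV. f i xb) - (\<Sum>i\<in>UNIV. f i xs) - L / 2 * (\<Sum>i\<in>UNIV. (norm (x i - xb))\<^sup>2) + \<mu> / 2 * (\<Sum>i\<in>UNIV. (norm (x i - xs))\<^sup>2)"
      by (simp add: sum.distrib sum_subtractf sum_distrib_left)
    have e2: "N * \<Delta> = (\<Sum>i\<in>UNIV. f i xb) - (\<Sum>i\<in>UNIV. f i xs)"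
      using N by (simp add: \<Delta>_def F_def N_def field_simps)
    have e3: "(\<Sum>i\<in>UNIV. (norm (x i - xs))\<^sup>2) = C + N * (norm c)\<^sup>2"
      using sum_norm_sq_split[of x xs] by (simp add: C_def N_def c_def xb_def)
    show ?thesis using e1 e2 e3 Cdef by simp
  qed
  have ha: "h \<bullet> c \<ge> \<Delta> - L / (2 * N) * C + \<mu> / (2 * N) * C + \<mu> / 2 * (norm c)\<^sup>2"
  proof -
    have "h \<bullet> c \<ge> (1 / N) * (N * \<Delta> - L / 2 * C + \<mu> / 2 * (C + N * (norm c)\<^sup>2))"
      unfolding hc using sum1 sum2 N by (intro mult_left_mono) auto
    then show ?thesis using N by (simp add: field_simps)
  qed
  have hG: "(norm (h - G))\<^sup>2 \<le> L\<^sup>2 * C / N"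
  proof -
    have "h - G = (1 / N) *\<^sub>R (\<Sum>i\<in>UNIV. df i (x i) - df i xb)"
      by (simp add: h_def G_def node_avg_def N_def sum_subtractf scaleR_diff_right)
    then have "(norm (h - G))\<^sup>2 = (1 / N)\<^sup>2 * (norm (\<Sum>i\<in>UNIV. df i (x i) - df i xb))\<^sup>2"
      using N by (simp add: power_divide)
    also have "\<dots> \<le> (1 / N)\<^sup>2 * (N * (\<Sum>i\<in>UNIV. (norm (df i (x i) - df i xb))\<^sup>2))"
      by (intro mult_left_mono) (simp_all add: norm_sum_sq_le N_def)
    also have "\<dots> \<le> (1 / N)\<^sup>2 * (N * (\<Sum>i\<in>UNIV. L\<^sup>2 * (norm (x i - xb))\<^sup>2))"
    proof -
      have "(norm (df i (x i) - df i xb))\<^sup>2 \<le> L\<^sup>2 * (norm (x i - xb))\<^sup>2" for i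
      proof -
        have "(norm (df i (x i) - df i xb))\<^sup>2 \<le> (L * norm (x i - xb))\<^sup>2"
          by (rule power_mono[OF smooth]) simp
        then show ?thesis by (simp add: power_mult_distrib)
      qed
      then show ?thesis using N by (intro mult_left_mono sum_mono) auto
    qed
    also have "\<dots> = L\<^sup>2 * C / N" using N by (simp add: Cdef sum_distrib_left[symmetric] power2_eq_square field_simps)
    finally show ?thesis .
  qed
  have Gd: "(norm G)\<^sup>2 \<le> 2 * L * \<Delta>"
  proof -
    define y where "y = xb - (1 / L) *\<^sub>R G"
    have d: "f i y \<le> f i xb + df i xb \<bullet> (y - xb) + L / 2 * (norm (y - xb))\<^sup>2" for i
      by (rule descent[OF grad smooth])
    have "(\<Sum>i\<in>UNIV. f i y) \<le> (\<Sum>i\<in>UNIV. f i xb + df i xb \<bullet> (y - xb) + L / 2 * (norm (y - xb))\<^sup>2)"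
      by (rule sum_mono) (rule d)
    also have "\<dots> = (\<Sum>i\<in>UNIV. f i xb) + N * (G \<bullet> (y - xb)) + N * (L / 2 * (norm (y - xb))\<^sup>2)"
      using N by (simp add: sum.distrib G_def node_avg_def N_def inner_sum_left)
    finally have "F y \<le> F xb + G \<bullet> (y - xb) + L / 2 * (norm (y - xb))\<^sup>2"
      using N unfolding F_def N_def by (simp add: field_simps)
    also have "G \<bullet> (y - xb) = - (1 / L) * (norm G)\<^sup>2"
      by (simp add: y_def power2_norm_eq_inner)
    also have "(norm (y - xb))\<^sup>2 = (1 / L)\<^sup>2 * (norm G)\<^sup>2"
      using L by (simp add: y_def power_divide)
    finally have "F y \<le> F xb - (1 / (2 * L)) * (norm G)\<^sup>2"
      using L by (simp add: power2_eq_square field_simps)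
    moreover have "F xs \<le> F y" by (rule minimizer)
    ultimately have "(1 / (2 * L)) * (norm G)\<^sup>2 \<le> \<Delta>" by (simp add: \<Delta>_def)
    then show ?thesis using L by (simp add: field_simps)
  qed
  have hsq: "(norm h)\<^sup>2 \<le> 2 * (L\<^sup>2 * C / N) + 2 * (2 * L * \<Delta>)"
  proof -
    have "norm h \<le> norm (h - G) + norm G" using norm_triangle_ineq[of "h - G" G] by simp
    then have "(norm h)\<^sup>2 \<le> (norm (h - G) + norm G)\<^sup>2" by (intro power_mono) auto
    also have "\<dots> \<le> 2 * (norm (h - G))\<^sup>2 + 2 * (norm G)\<^sup>2"
      by (smt (verit) sum_squares_bound power2_sum)
    finally show ?thesis using hG Gd by linarith
  qed
  have expand: "(norm (c - a *\<^sub>R h))\<^sup>2 = (norm c)\<^sup>2 - 2 * a * (h \<bullet> c) + a\<^sup>2 * (norm h)\<^sup>2"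
    by (simp add: norm_diff_sq inner_commute power_mult_distrib)
  have t1: "a\<^sup>2 * (norm h)\<^sup>2 \<le> a\<^sup>2 * (2 * (L\<^sup>2 * C / N) + 2 * (2 * L * \<Delta>))"
    using hsq by (intro mult_left_mono) auto
  have t2: "- 2 * a * (h \<bullet> c) \<le> - 2 * a * (\<Delta> - L / (2 * N) * C + \<mu> / (2 * N) * C + \<mu> / 2 * (norm c)\<^sup>2)"
    using ha a by (intro mult_left_mono_neg) auto
  have k1: "a\<^sup>2 * (4 * L * \<Delta>) \<le> a * \<Delta>"
  proof -
    have "a\<^sup>2 * (4 * L * \<Delta>) = (a * L) * (4 * a * \<Delta>)" by (simp add: power2_eq_square)
    also have "\<dots> \<le> (1/4) * (4 * a * \<Delta>)" using a D0 by (intro mult_right_mono) auto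
    finally show ?thesis by simp
  qed
  have k2: "a\<^sup>2 * (2 * (L\<^sup>2 * C / N)) \<le> a * L / 2 * C / N"
  proof -
    have "a\<^sup>2 * (2 * (L\<^sup>2 * C / N)) = (a * L) * (2 * a * L * C / N)" by (simp add: power2_eq_square)
    also have "\<dots> \<le> (1/4) * (2 * a * L * C / N)" using a L C0 N by (intro mult_right_mono) auto
    finally show ?thesis by (simp add: mult.commute mult.left_commute)
  qed
  have k3: "\<mu> * a / N * C \<ge> 0" using mu a N C0 by simp
  have k4: "\<mu> * a * (norm c)\<^sup>2 \<ge> 0" using mu a by simp
  define P where "P = a * L * C / N"
  define M where "M = \<mu> * a * C / N"
  have q1: "- 2 * a * (\<Delta> - L / (2 * N) * C + \<mu> / (2 * N) * C + \<mu> / 2 * (norm c)\<^sup>2)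
      = - 2 * a * \<Delta> + P - M - \<mu> * a * (norm c)\<^sup>2"
    using N by (simp add: P_def M_def field_simps)
  have q2: "a\<^sup>2 * (2 * (L\<^sup>2 * C / N) + 2 * (2 * L * \<Delta>)) = a\<^sup>2 * (2 * (L\<^sup>2 * C / N)) + a\<^sup>2 * (4 * L * \<Delta>)"
    by (simp add: algebra_simps)
  have q3: "a * L / 2 * C / N = P / 2" by (simp add: P_def)
  have q4: "3 * a * L / N * C = 3 * P" by (simp add: P_def)
  have q5: "M \<ge> 0" using k3 by (simp add: M_def mult.commute mult.left_commute)
  have q6: "P \<ge> 0" using a L C0 N by (simp add: P_def)
  have q7: "(1 - \<mu> * a / 2) * (norm c)\<^sup>2 = (norm c)\<^sup>2 - \<mu> * a * (norm c)\<^sup>2 / 2" by (simp add: algebra_simps)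
  have "(norm (c - a *\<^sub>R h))\<^sup>2 \<le> (1 - \<mu> * a / 2) * (norm c)\<^sup>2 + 3 * a * L / N * C - a * \<Delta>"
    unfolding q4 q7 using expand t1 t2 k1 k2 k4 q1 q2 q3 q5 q6 by linarith
  then show ?thesis by (simp add: c_def xb_def h_def N_def C_def \<Delta>_def)
qed


lemma SC:
  fixes M :: "'i \<Rightarrow> 'b measure"
  assumes prob: "\<And>i. prob_space (M i)" and F[measurable]: "F \<in> borel_measurable (PiM UNIV M)"
  shows "(\<integral>\<^sup>+\<omega>. F \<omega> \<partial>PiM UNIV M) = (\<integral>\<^sup>+\<omega>. (\<integral>\<^sup>+y. F (fun_upd \<omega> q y) \<partial>M q) \<partial>PiM UNIV M)"
proof -
  define I' where "I' = UNIV - {q}"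
  have ins: "insert q I' = UNIV" "I' \<union> {q} = UNIV" by (auto simp: I'_def)
  interpret Mq: prob_space "M q" by (rule prob)
  interpret P': prob_space "PiM I' M" by (intro prob_space_PiM prob)
  interpret pair_sigma_finite "M q" "PiM I' M" ..
  have dist: "distr (M q \<Otimes>\<^sub>M PiM I' M) (PiM UNIV M) (\<lambda>(x, X). X(q := x)) = PiM UNIV M"
    using distr_pair_PiM_eq_PiM[of I' M q] prob unfolding ins by simp
  have mm: "(\<lambda>(x, X). X(q := x)) \<in> measurable (M q \<Otimes>\<^sub>M PiM I' M) (PiM UNIV M)"
  proof -
    have "(\<lambda>z. (snd z)(q := fst z)) \<in> measurable (M q \<Otimes>\<^sub>M PiM I' M) (PiM UNIV M)"
      by (rule measurable_fun_upd[OF ins(2)[symmetric]]) auto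
    then show ?thesis by (simp add: case_prod_beta')
  qed
  have gen: "(\<integral>\<^sup>+\<omega>. K \<omega> \<partial>PiM UNIV M) = (\<integral>\<^sup>+X. (\<integral>\<^sup>+x. K (fun_upd X q x) \<partial>M q) \<partial>PiM I' M)"
    if K: "K \<in> borel_measurable (PiM UNIV M)" for K
  proof -
    have "(\<integral>\<^sup>+\<omega>. K \<omega> \<partial>PiM UNIV M) = (\<integral>\<^sup>+\<omega>. K \<omega> \<partial>distr (M q \<Otimes>\<^sub>M PiM I' M) (PiM UNIV M) (\<lambda>(x, X). X(q := x)))"
      by (simp add: dist)
    also have "\<dots> = (\<integral>\<^sup>+z. K ((\<lambda>(x, X). X(q := x)) z) \<partial>(M q \<Otimes>\<^sub>M PiM I' M))"
      by (rule nn_integral_distr[OF mm]) (use K in simp)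
    also have "\<dots> = (\<integral>\<^sup>+X. (\<integral>\<^sup>+x. K (fun_upd X q x) \<partial>M q) \<partial>PiM I' M)"
      by (subst nn_integral_snd[symmetric]) (auto intro!: measurable_compose[OF mm K])
    finally show ?thesis .
  qed
  have Hm: "(\<lambda>\<omega>. \<integral>\<^sup>+y. F (fun_upd \<omega> q y) \<partial>M q) \<in> borel_measurable (PiM UNIV M)"
  proof (rule Mq.borel_measurable_nn_integral)
    have "(\<lambda>(f, y). f(q := y)) \<in> measurable (PiM UNIV M \<Otimes>\<^sub>M M q) (PiM (insert q UNIV) M)"
      by (rule measurable_add_dim)
    then have "(\<lambda>(f, y). f(q := y)) \<in> measurable (PiM UNIV M \<Otimes>\<^sub>M M q) (PiM UNIV M)" by simp
    from measurable_compose[OF this F]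
    show "(\<lambda>(\<omega>, y). F (fun_upd \<omega> q y)) \<in> borel_measurable (PiM UNIV M \<Otimes>\<^sub>M M q)"
      by (simp add: case_prod_beta')
  qed
  have "(\<integral>\<^sup>+\<omega>. (\<integral>\<^sup>+y. F (fun_upd \<omega> q y) \<partial>M q) \<partial>PiM UNIV M)
      = (\<integral>\<^sup>+X. (\<integral>\<^sup>+x. (\<integral>\<^sup>+y. F (fun_upd X q y) \<partial>M q) \<partial>M q) \<partial>PiM I' M)"
    using gen[OF Hm] by simp
  also have "\<dots> = (\<integral>\<^sup>+X. (\<integral>\<^sup>+y. F (fun_upd X q y) \<partial>M q) \<partial>PiM I' M)"
    by (simp add: nn_integral_const Mq.emeasure_space_1)
  also have "\<dots> = (\<integral>\<^sup>+\<omega>. F \<omega> \<partial>PiM UNIV M)" using gen[OF F] by simp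
  finally show ?thesis by simp
qed


definition L2 :: "'b measure \<Rightarrow> ('b \<Rightarrow> 'a::real_normed_vector) \<Rightarrow> bool" where
  "L2 M f \<longleftrightarrow> f \<in> borel_measurable M \<and> integrable M (\<lambda>\<omega>. (norm (f \<omega>))\<^sup>2)"

lemma L2_const: "prob_space M \<Longrightarrow> L2 M (\<lambda>_. c :: 'a::{real_normed_vector, second_countable_topology})"
proof -
  assume "prob_space M"
  then interpret prob_space M .
  show ?thesis by (simp add: L2_def)
qed

lemma L2_add:
  fixes f g :: "'b \<Rightarrow> 'a::{real_normed_vector, second_countable_topology}"
  assumes "L2 M f" "L2 M g" shows "L2 M (\<lambda>\<omega>. f \<omega> + g \<omega>)"
proof -
  have m: "(\<lambda>\<omega>. f \<omega> + g \<omega>) \<in> borel_measurable M" using assms by (auto simp add: L2_def intro: borel_measurable_add)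
  have i: "integrable M (\<lambda>\<omega>. 2 * (norm (f \<omega>))\<^sup>2 + 2 * (norm (g \<omega>))\<^sup>2)" using assms by (simp add: L2_def)
  have b: "norm ((norm (f \<omega> + g \<omega>))\<^sup>2) \<le> norm (2 * (norm (f \<omega>))\<^sup>2 + 2 * (norm (g \<omega>))\<^sup>2)" for \<omega>
  proof -
    have "norm (f \<omega> + g \<omega>) \<le> norm (f \<omega>) + norm (g \<omega>)" by (rule norm_triangle_ineq)
    then have "(norm (f \<omega> + g \<omega>))\<^sup>2 \<le> (norm (f \<omega>) + norm (g \<omega>))\<^sup>2" by (intro power_mono) auto
    also have "\<dots> \<le> 2 * (norm (f \<omega>))\<^sup>2 + 2 * (norm (g \<omega>))\<^sup>2"
      using power2_sum[of "norm (f \<omega>)" "norm (g \<omega>)"] power2_diff[of "norm (f \<omega>)" "norm (g \<omega>)"]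
        zero_le_power2[of "norm (f \<omega>) - norm (g \<omega>)"] by linarith
    finally show ?thesis by simp
  qed
  show ?thesis unfolding L2_def
    using m Bochner_Integration.integrable_bound[OF i, of "\<lambda>\<omega>. (norm (f \<omega> + g \<omega>))\<^sup>2"] b by auto
qed

lemma L2_scale:
  fixes f :: "'b \<Rightarrow> 'a::{real_normed_vector, second_countable_topology}"
  assumes "L2 M f" shows "L2 M (\<lambda>\<omega>. c *\<^sub>R f \<omega>)"
  using assms by (auto simp add: L2_def power_mult_distrib intro: borel_measurable_scaleR)

lemma L2_uminus:
  fixes f :: "'b \<Rightarrow> 'a::{real_normed_vector, second_countable_topology}"
  assumes "L2 M f" shows "L2 M (\<lambda>\<omega>. - f \<omega>)"
  using assms by (simp add: L2_def)

lemma L2_diff: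
  fixes f g :: "'b \<Rightarrow> 'a::{real_normed_vector, second_countable_topology}"
  assumes "L2 M f" "L2 M g" shows "L2 M (\<lambda>\<omega>. f \<omega> - g \<omega>)"
  using L2_add[OF assms(1) L2_uminus[OF assms(2)]] by simp

lemma L2_sum:
  fixes f :: "'i \<Rightarrow> 'b \<Rightarrow> 'a::{real_normed_vector, second_countable_topology}"
  assumes "prob_space M" "finite S" "\<And>s. s \<in> S \<Longrightarrow> L2 M (f s)" shows "L2 M (\<lambda>\<omega>. \<Sum>s\<in>S. f s \<omega>)"
  using assms(2,3)
proof (induction S rule: finite_induct)
  case empty then show ?case using L2_const[OF assms(1), of 0] by simp
next
  case (insert s S)
  have "L2 M (\<lambda>\<omega>. f s \<omega> + (\<Sum>s\<in>S. f s \<omega>))" using insert by (intro L2_add) auto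
  then show ?case using insert by simp
qed

lemma real_le_1_sq: "(x::real) \<le> 1 + x\<^sup>2"
proof -
  have "0 \<le> (x - 1/2)\<^sup>2" by simp
  moreover have "(x - 1/2)\<^sup>2 = x\<^sup>2 - x + 1/4" by (simp add: power2_eq_square algebra_simps)
  ultimately show ?thesis by linarith
qed

lemma L2_integrable_norm:
  fixes f :: "'b \<Rightarrow> 'a::{real_normed_vector, second_countable_topology}"
  assumes "prob_space M" "L2 M f" shows "integrable M (\<lambda>\<omega>. norm (f \<omega>))"
proof -
  interpret prob_space M by fact
  have i: "integrable M (\<lambda>\<omega>. 1 + (norm (f \<omega>))\<^sup>2)" using assms(2) by (simp add: L2_def)
  have b: "norm (norm (f \<omega>)) \<le> norm (1 + (norm (f \<omega>))\<^sup>2)" for \<omega>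
    using real_le_1_sq[of "norm (f \<omega>)"] by simp
  have m: "(\<lambda>\<omega>. norm (f \<omega>)) \<in> borel_measurable M" using assms(2) by (auto simp: L2_def intro: borel_measurable_norm)
  show ?thesis by (rule Bochner_Integration.integrable_bound[OF i m]) (use b in auto)
qed


definition yit where "yit Wb \<gamma> \<beta> g x0 \<omega> t = fst (snd (flexgt Wb \<gamma> \<beta> g x0 \<omega> t))"
definition zit where "zit Wb \<gamma> \<beta> g x0 \<omega> t = fst (snd (snd (flexgt Wb \<gamma> \<beta> g x0 \<omega> t)))"
definition Sit where "Sit Wb \<gamma> \<beta> g x0 \<omega> t = snd (snd (snd (flexgt Wb \<gamma> \<beta> g x0 \<omega> t)))"

lemma comp_0:
  "xit Wb \<gamma> \<beta> g x0 \<omega> 0 = x0" "yit Wb \<gamma> \<beta> g x0 \<omega> 0 = gradG g x0 \<omega> 0"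
  "zit Wb \<gamma> \<beta> g x0 \<omega> 0 = x0" "Sit Wb \<gamma> \<beta> g x0 \<omega> 0 = gradG g x0 \<omega> 0"
  by (simp_all add: xit_def yit_def zit_def Sit_def)

lemma comp_Suc:
  "xit Wb \<gamma> \<beta> g x0 \<omega> (Suc t) = (if \<beta> dvd Suc t
      then mix Wb (\<lambda>i. zit Wb \<gamma> \<beta> g x0 \<omega> t i - \<gamma> *\<^sub>R Sit Wb \<gamma> \<beta> g x0 \<omega> t i)
      else (\<lambda>i. xit Wb \<gamma> \<beta> g x0 \<omega> t i - \<gamma> *\<^sub>R yit Wb \<gamma> \<beta> g x0 \<omega> t i))"
  "yit Wb \<gamma> \<beta> g x0 \<omega> (Suc t) = (if \<beta> dvd Suc t
      then mix Wb (\<lambda>i. yit Wb \<gamma> \<beta> g x0 \<omega> t i + gradG g (xit Wb \<gamma> \<beta> g x0 \<omega> (Suc t)) \<omega> (Suc t) i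
                          - gradG g (zit Wb \<gamma> \<beta> g x0 \<omega> t) \<omega> t i)
      else (\<lambda>i. yit Wb \<gamma> \<beta> g x0 \<omega> t i + gradG g (zit Wb \<gamma> \<beta> g x0 \<omega> t) \<omega> (Suc t) i
                          - gradG g (zit Wb \<gamma> \<beta> g x0 \<omega> t) \<omega> t i))"
  "zit Wb \<gamma> \<beta> g x0 \<omega> (Suc t) = (if \<beta> dvd Suc t then xit Wb \<gamma> \<beta> g x0 \<omega> (Suc t) else zit Wb \<gamma> \<beta> g x0 \<omega> t)"
  "Sit Wb \<gamma> \<beta> g x0 \<omega> (Suc t) = (if \<beta> dvd Suc t then yit Wb \<gamma> \<beta> g x0 \<omega> (Suc t)
      else (\<lambda>i. Sit Wb \<gamma> \<beta> g x0 \<omega> t i + yit Wb \<gamma> \<beta> g x0 \<omega> (Suc t) i))"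
proof -
  obtain x y z S where e: "flexgt Wb \<gamma> \<beta> g x0 \<omega> t = (x, y, z, S)" by (cases "flexgt Wb \<gamma> \<beta> g x0 \<omega> t") auto
  note st = flexgt_step[OF e]
  show "xit Wb \<gamma> \<beta> g x0 \<omega> (Suc t) = (if \<beta> dvd Suc t
      then mix Wb (\<lambda>i. zit Wb \<gamma> \<beta> g x0 \<omega> t i - \<gamma> *\<^sub>R Sit Wb \<gamma> \<beta> g x0 \<omega> t i)
      else (\<lambda>i. xit Wb \<gamma> \<beta> g x0 \<omega> t i - \<gamma> *\<^sub>R yit Wb \<gamma> \<beta> g x0 \<omega> t i))"
    using st e by (simp add: xit_def yit_def zit_def Sit_def Let_def)
  show "yit Wb \<gamma> \<beta> g x0 \<omega> (Suc t) = (if \<beta> dvd Suc t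
      then mix Wb (\<lambda>i. yit Wb \<gamma> \<beta> g x0 \<omega> t i + gradG g (xit Wb \<gamma> \<beta> g x0 \<omega> (Suc t)) \<omega> (Suc t) i
                          - gradG g (zit Wb \<gamma> \<beta> g x0 \<omega> t) \<omega> t i)
      else (\<lambda>i. yit Wb \<gamma> \<beta> g x0 \<omega> t i + gradG g (zit Wb \<gamma> \<beta> g x0 \<omega> t) \<omega> (Suc t) i
                          - gradG g (zit Wb \<gamma> \<beta> g x0 \<omega> t) \<omega> t i))"
    using st e by (simp add: xit_def yit_def zit_def Sit_def Let_def)
  show "zit Wb \<gamma> \<beta> g x0 \<omega> (Suc t) = (if \<beta> dvd Suc t then xit Wb \<gamma> \<beta> g x0 \<omega> (Suc t) else zit Wb \<gamma> \<beta> g x0 \<omega> t)"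
    using st e by (simp add: xit_def yit_def zit_def Sit_def Let_def)
  show "Sit Wb \<gamma> \<beta> g x0 \<omega> (Suc t) = (if \<beta> dvd Suc t then yit Wb \<gamma> \<beta> g x0 \<omega> (Suc t)
      else (\<lambda>i. Sit Wb \<gamma> \<beta> g x0 \<omega> t i + yit Wb \<gamma> \<beta> g x0 \<omega> (Suc t) i))"
    using st e by (simp add: xit_def yit_def zit_def Sit_def Let_def)
qed

lemma zit_dep:
  "(\<And>i s. s < t \<Longrightarrow> \<omega> (i, s) = \<omega>' (i, s)) \<Longrightarrow> zit Wb \<gamma> \<beta> g x0 \<omega> t = zit Wb \<gamma> \<beta> g x0 \<omega>' t"
proof (cases t)
  case 0 then show ?thesis by (simp add: zit_def)
next
  case (Suc t')
  assume h: "\<And>i s. s < t \<Longrightarrow> \<omega> (i, s) = \<omega>' (i, s)"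
  have e: "flexgt Wb \<gamma> \<beta> g x0 \<omega> t' = flexgt Wb \<gamma> \<beta> g x0 \<omega>' t'"
    by (rule flexgt_dep) (use h Suc in auto)
  show ?thesis using e Suc by (simp add: zit_def Let_def split: prod.split)
qed

lemma upd_agree: "(s::nat) < t \<Longrightarrow> (fun_upd \<omega> (j, t) y) (i, s) = \<omega> (i, s)"
  by auto

context
  fixes D :: "'n::finite \<Rightarrow> 's measure" and g :: "'n \<Rightarrow> 'a::euclidean_space \<Rightarrow> 's \<Rightarrow> 'a"
    and df :: "'n \<Rightarrow> 'a \<Rightarrow> 'a" and \<sigma> L :: real
  assumes prob: "\<And>i. prob_space (D i)"
    and meas: "\<And>i. (\<lambda>(x, s). g i x s) \<in> borel_measurable (borel \<Otimes>\<^sub>M D i)"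
    and unbiased: "\<And>i x. integrable (D i) (g i x) \<and> (\<integral>s. g i x s \<partial>D i) = df i x"
    and variance: "\<And>i x. (\<integral>\<^sup>+s. ennreal ((norm (g i x s - df i x))\<^sup>2) \<partial>D i) \<le> ennreal (\<sigma>\<^sup>2)"
    and smooth: "\<And>i x y. norm (df i x - df i y) \<le> L * norm (x - y)"
    and Lnn: "L \<ge> 0"
begin

abbreviation OM where "OM \<equiv> PiM UNIV (\<lambda>(i::'n, t::nat). D i)"

lemma g_meas: "g i x \<in> borel_measurable (D i)"
  using measurable_compose[OF measurable_Pair1'[of x borel "D i"] meas[of i]] by simp

lemma prob_MM: "prob_space ((\<lambda>(i::'n, t::nat). D i) q)" by (cases q) (simp add: prob)

lemma prob_OM: "prob_space OM" by (rule prob_space_PiM) (simp add: prob_MM)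

lemma coord_meas: "(\<lambda>\<omega>. \<omega> (i, t)) \<in> measurable OM (D i)"
  using measurable_component_singleton[of "(i, t)" UNIV "\<lambda>(i::'n, t::nat). D i"] by simp

lemma var_integrable: "integrable (D i) (\<lambda>s. (norm (g i x s - df i x))\<^sup>2)"
proof -
  have m: "(\<lambda>s. (norm (g i x s - df i x))\<^sup>2) \<in> borel_measurable (D i)"
    using g_meas by measurable
  have "(\<integral>\<^sup>+s. ennreal (norm ((norm (g i x s - df i x))\<^sup>2)) \<partial>D i) \<le> ennreal (\<sigma>\<^sup>2)"
    using variance by simp
  also have "\<dots> < \<infinity>" by simp
  finally show ?thesis using m by (simp add: integrable_iff_bounded)
qed

lemma var_le: "(\<integral>s. (norm (g i x s - df i x))\<^sup>2 \<partial>D i) \<le> \<sigma>\<^sup>2"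
proof -
  have m: "(\<lambda>s. (norm (g i x s - df i x))\<^sup>2) \<in> borel_measurable (D i)"
    using g_meas by measurable
  have "(\<integral>s. (norm (g i x s - df i x))\<^sup>2 \<partial>D i) = enn2real (\<integral>\<^sup>+s. ennreal ((norm (g i x s - df i x))\<^sup>2) \<partial>D i)"
    by (rule integral_eq_nn_integral[OF m]) auto
  also have "\<dots> \<le> \<sigma>\<^sup>2" by (rule enn2real_leI) (use variance in auto)
  finally show ?thesis .
qed

lemma inner_step:
  "(\<integral>\<^sup>+y. ennreal ((norm (w + c *\<^sub>R (g i x y - df i x)))\<^sup>2) \<partial>D i) \<le> ennreal ((norm w)\<^sup>2 + c\<^sup>2 * \<sigma>\<^sup>2)"
proof -
  interpret prob_space "D i" by (rule prob)
  define e where "e y = g i x y - df i x" for y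
  have eq: "(norm (w + c *\<^sub>R e y))\<^sup>2 = (norm w)\<^sup>2 + 2 * c * (w \<bullet> e y) + c\<^sup>2 * (norm (e y))\<^sup>2" for y
    by (simp add: norm_add_sq power_mult_distrib)
  have ie: "integrable (D i) e" unfolding e_def using unbiased[of i x] by auto
  have ie2: "integrable (D i) (\<lambda>y. (norm (e y))\<^sup>2)" unfolding e_def by (rule var_integrable)
  have int0: "(\<integral>y. w \<bullet> e y \<partial>D i) = 0"
  proof -
    have "(\<integral>y. e y \<partial>D i) = df i x - df i x"
      unfolding e_def using unbiased[of i x] by (subst Bochner_Integration.integral_diff) (auto simp: prob_space)
    then show ?thesis using ie by simp
  qed
  have I: "integrable (D i) (\<lambda>y. (norm w)\<^sup>2 + 2 * c * (w \<bullet> e y) + c\<^sup>2 * (norm (e y))\<^sup>2)"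
    using ie ie2 by auto
  have "(\<integral>\<^sup>+y. ennreal ((norm (w + c *\<^sub>R (g i x y - df i x)))\<^sup>2) \<partial>D i)
      = (\<integral>\<^sup>+y. ennreal ((norm w)\<^sup>2 + 2 * c * (w \<bullet> e y) + c\<^sup>2 * (norm (e y))\<^sup>2) \<partial>D i)"
    by (simp only: e_def[symmetric] eq)
  also have "\<dots> = ennreal (\<integral>y. (norm w)\<^sup>2 + 2 * c * (w \<bullet> e y) + c\<^sup>2 * (norm (e y))\<^sup>2 \<partial>D i)"
  proof (rule nn_integral_eq_integral[OF I])
    show "AE y in D i. 0 \<le> (norm w)\<^sup>2 + 2 * c * (w \<bullet> e y) + c\<^sup>2 * (norm (e y))\<^sup>2"
      by (intro AE_I2) (simp add: eq[symmetric])
  qed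
  also have "(\<integral>y. (norm w)\<^sup>2 + 2 * c * (w \<bullet> e y) + c\<^sup>2 * (norm (e y))\<^sup>2 \<partial>D i)
      = (norm w)\<^sup>2 + 2 * c * (\<integral>y. w \<bullet> e y \<partial>D i) + c\<^sup>2 * (\<integral>y. (norm (e y))\<^sup>2 \<partial>D i)"
    using ie ie2 by (simp add: prob_space)
  also have "\<dots> \<le> (norm w)\<^sup>2 + c\<^sup>2 * \<sigma>\<^sup>2"
  proof -
    have "c\<^sup>2 * (\<integral>y. (norm (e y))\<^sup>2 \<partial>D i) \<le> c\<^sup>2 * \<sigma>\<^sup>2"
      using var_le[of i x] unfolding e_def by (intro mult_left_mono) auto
    then show ?thesis using int0 by simp
  qed
  finally show ?thesis by (simp add: ennreal_leI)
qed

lemma df_sq_bound: "(norm (df i x))\<^sup>2 \<le> 2 * (norm (df i 0))\<^sup>2 + 2 * L\<^sup>2 * (norm x)\<^sup>2"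
proof -
  have "norm (df i x) \<le> norm (df i x - df i 0) + norm (df i 0)"
    using norm_triangle_ineq[of "df i x - df i 0" "df i 0"] by simp
  also have "\<dots> \<le> L * norm x + norm (df i 0)" using smooth[of i x 0] by simp
  finally have "(norm (df i x))\<^sup>2 \<le> (norm (df i 0) + L * norm x)\<^sup>2" by (intro power_mono) auto
  also have "\<dots> \<le> 2 * (norm (df i 0))\<^sup>2 + 2 * (L * norm x)\<^sup>2"
    using power2_sum[of "norm (df i 0)" "L * norm x"] power2_diff[of "norm (df i 0)" "L * norm x"]
        zero_le_power2[of "norm (df i 0) - L * norm x"] by linarith
  finally show ?thesis by (simp add: power_mult_distrib)
qed

lemma L2_grad:
  assumes z: "L2 OM z" and ind: "\<And>\<omega> y. z (fun_upd \<omega> (i, t) y) = z \<omega>"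
  shows "L2 OM (\<lambda>\<omega>. g i (z \<omega>) (\<omega> (i, t)))"
proof -
  interpret P: prob_space OM by (rule prob_OM)
  have zm: "z \<in> borel_measurable OM" using z by (simp add: L2_def)
  have m: "(\<lambda>\<omega>. g i (z \<omega>) (\<omega> (i, t))) \<in> borel_measurable OM"
    using measurable_compose[OF measurable_Pair[OF zm coord_meas] meas[of i]] by simp
  have m2: "(\<lambda>\<omega>. ennreal ((norm (g i (z \<omega>) (\<omega> (i, t))))\<^sup>2)) \<in> borel_measurable OM"
    using m by measurable
  have inner: "(\<integral>\<^sup>+y. ennreal ((norm (g i x y))\<^sup>2) \<partial>D i) \<le> ennreal ((norm (df i x))\<^sup>2 + \<sigma>\<^sup>2)" for x
    using inner_step[where w="df i x" and c=1 and i=i and x=x] by simp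
  have "(\<integral>\<^sup>+\<omega>. ennreal ((norm (g i (z \<omega>) (\<omega> (i, t))))\<^sup>2) \<partial>OM)
     = (\<integral>\<^sup>+\<omega>. (\<integral>\<^sup>+y. ennreal ((norm (g i (z (fun_upd \<omega> (i, t) y)) (fun_upd \<omega> (i, t) y (i, t))))\<^sup>2)
            \<partial>(\<lambda>(i::'n, t::nat). D i) (i, t)) \<partial>OM)"
    by (rule SC[OF prob_MM m2])
  also have "\<dots> = (\<integral>\<^sup>+\<omega>. (\<integral>\<^sup>+y. ennreal ((norm (g i (z \<omega>) y))\<^sup>2) \<partial>D i) \<partial>OM)"
    by (simp add: ind)
  also have "\<dots> \<le> (\<integral>\<^sup>+\<omega>. ennreal ((norm (df i (z \<omega>)))\<^sup>2 + \<sigma>\<^sup>2) \<partial>OM)"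
    by (intro nn_integral_mono inner)
  also have "\<dots> \<le> (\<integral>\<^sup>+\<omega>. ennreal (2 * (norm (df i 0))\<^sup>2 + 2 * L\<^sup>2 * (norm (z \<omega>))\<^sup>2 + \<sigma>\<^sup>2) \<partial>OM)"
    by (intro nn_integral_mono ennreal_leI add_right_mono df_sq_bound)
  also have "\<dots> = ennreal (\<integral>\<omega>. 2 * (norm (df i 0))\<^sup>2 + 2 * L\<^sup>2 * (norm (z \<omega>))\<^sup>2 + \<sigma>\<^sup>2 \<partial>OM)"
    by (rule nn_integral_eq_integral) (use z in \<open>auto simp: L2_def\<close>)
  also have "\<dots> < \<infinity>" by simp
  finally have fin: "(\<integral>\<^sup>+\<omega>. ennreal ((norm (g i (z \<omega>) (\<omega> (i, t))))\<^sup>2) \<partial>OM) < \<infinity>" .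
  have m3: "(\<lambda>\<omega>. (norm (g i (z \<omega>) (\<omega> (i, t))))\<^sup>2) \<in> borel_measurable OM" using m by measurable
  show ?thesis unfolding L2_def using m m3 fin by (simp add: integrable_iff_bounded)
qed

lemma iter_K:
  fixes U :: "'n \<times> nat \<Rightarrow> 's \<Rightarrow> ('n \<times> nat \<Rightarrow> 's) \<Rightarrow> 'a" and v :: "('n \<times> nat \<Rightarrow> 's) \<Rightarrow> 'a"
  assumes "finite K" "s \<ge> 0"
    and "v \<in> borel_measurable OM"
    and "\<And>\<omega> q y. q \<in> K \<Longrightarrow> v (fun_upd \<omega> q y) = v \<omega>"
    and "\<And>q. q \<in> K \<Longrightarrow> (\<lambda>\<omega>. U q (\<omega> q) \<omega>) \<in> borel_measurable OM"
    and "\<And>q q' \<omega> y y'. q \<in> K \<Longrightarrow> q' \<in> K \<Longrightarrow> U q y (fun_upd \<omega> q' y') = U q y \<omega>"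
    and "\<And>q \<omega> w. q \<in> K \<Longrightarrow> (\<integral>\<^sup>+y. ennreal ((norm (w + U q y \<omega>))\<^sup>2) \<partial>((\<lambda>(i::'n, t::nat). D i) q)) \<le> ennreal ((norm w)\<^sup>2 + s)"
  shows "(\<integral>\<^sup>+\<omega>. ennreal ((norm (v \<omega> + (\<Sum>q\<in>K. U q (\<omega> q) \<omega>)))\<^sup>2) \<partial>OM)
     \<le> (\<integral>\<^sup>+\<omega>. ennreal ((norm (v \<omega>))\<^sup>2) \<partial>OM) + ennreal (real (card K) * s)"
  using assms(1,3-)
proof (induction K arbitrary: v rule: finite_induct)
  case empty then show ?case by simp
next
  case (insert q K)
  interpret P: prob_space OM by (rule prob_OM)
  interpret Q: prob_space "(\<lambda>(i::'n, t::nat). D i) q" by (rule prob_MM)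
  define v' where "v' \<omega> = v \<omega> + U q (\<omega> q) \<omega>" for \<omega>
  have v'm: "v' \<in> borel_measurable OM"
    unfolding v'_def using insert.prems(1) insert.prems(3)[of q] by (auto intro: borel_measurable_add)
  have v'ind: "v' (fun_upd \<omega> q' y) = v' \<omega>" if "q' \<in> K" for \<omega> q' y
  proof -
    have "q' \<noteq> q" using that insert.hyps by auto
    have h1: "v (fun_upd \<omega> q' y) = v \<omega>" by (rule insert.prems(2)) (use that in auto)
    have h2: "U q (\<omega> q) (fun_upd \<omega> q' y) = U q (\<omega> q) \<omega>" by (rule insert.prems(4)) (use that in auto)
    show ?thesis unfolding v'_def using \<open>q' \<noteq> q\<close> h1 h2 by simp
  qed
  have IH: "(\<integral>\<^sup>+\<omega>. ennreal ((norm (v' \<omega> + (\<Sum>q\<in>K. U q (\<omega> q) \<omega>)))\<^sup>2) \<partial>OM)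
     \<le> (\<integral>\<^sup>+\<omega>. ennreal ((norm (v' \<omega>))\<^sup>2) \<partial>OM) + ennreal (real (card K) * s)"
    by (rule insert.IH[OF v'm v'ind]) (use insert.prems in auto)
  have eqsum: "v \<omega> + (\<Sum>q\<in>insert q K. U q (\<omega> q) \<omega>) = v' \<omega> + (\<Sum>q\<in>K. U q (\<omega> q) \<omega>)" for \<omega>
    using insert.hyps by (simp add: v'_def add.assoc)
  have v'm2: "(\<lambda>\<omega>. ennreal ((norm (v' \<omega>))\<^sup>2)) \<in> borel_measurable OM" using v'm by measurable
  have upd: "v' (fun_upd \<omega> q y) = v \<omega> + U q y \<omega>" for \<omega> y
  proof -
    have h1: "v (fun_upd \<omega> q y) = v \<omega>" by (rule insert.prems(2)) auto
    have h2: "U q y (fun_upd \<omega> q y) = U q y \<omega>" by (rule insert.prems(4)) auto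
    show ?thesis unfolding v'_def using h1 h2 by simp
  qed
  have step: "(\<integral>\<^sup>+\<omega>. ennreal ((norm (v' \<omega>))\<^sup>2) \<partial>OM) \<le> (\<integral>\<^sup>+\<omega>. ennreal ((norm (v \<omega>))\<^sup>2) \<partial>OM) + ennreal s"
  proof -
    have "(\<integral>\<^sup>+\<omega>. ennreal ((norm (v' \<omega>))\<^sup>2) \<partial>OM)
        = (\<integral>\<^sup>+\<omega>. (\<integral>\<^sup>+y. ennreal ((norm (v' (fun_upd \<omega> q y)))\<^sup>2) \<partial>(\<lambda>(i::'n, t::nat). D i) q) \<partial>OM)"
      by (rule SC[OF prob_MM v'm2])
    also have "\<dots> = (\<integral>\<^sup>+\<omega>. (\<integral>\<^sup>+y. ennreal ((norm (v \<omega> + U q y \<omega>))\<^sup>2) \<partial>(\<lambda>(i::'n, t::nat). D i) q) \<partial>OM)"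
      by (simp add: upd)
    also have "\<dots> \<le> (\<integral>\<^sup>+\<omega>. ennreal ((norm (v \<omega>))\<^sup>2 + s) \<partial>OM)"
      by (intro nn_integral_mono insert.prems(5)) simp
    also have "\<dots> = (\<integral>\<^sup>+\<omega>. ennreal ((norm (v \<omega>))\<^sup>2) \<partial>OM) + (\<integral>\<^sup>+\<omega>. ennreal s \<partial>OM)"
    proof -
      have "(\<integral>\<^sup>+\<omega>. ennreal ((norm (v \<omega>))\<^sup>2 + s) \<partial>OM) = (\<integral>\<^sup>+\<omega>. ennreal ((norm (v \<omega>))\<^sup>2) + ennreal s \<partial>OM)"
        using \<open>s \<ge> 0\<close> by (intro nn_integral_cong) (simp add: ennreal_plus)
      also have "\<dots> = (\<integral>\<^sup>+\<omega>. ennreal ((norm (v \<omega>))\<^sup>2) \<partial>OM) + (\<integral>\<^sup>+\<omega>. ennreal s \<partial>OM)"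
        by (rule nn_integral_add) (use insert.prems(1) in measurable)
      finally show ?thesis .
    qed
    also have "(\<integral>\<^sup>+\<omega>. ennreal s \<partial>OM) = ennreal s" by (simp add: P.emeasure_space_1)
    finally show ?thesis .
  qed
  have "(\<integral>\<^sup>+\<omega>. ennreal ((norm (v \<omega> + (\<Sum>q\<in>insert q K. U q (\<omega> q) \<omega>)))\<^sup>2) \<partial>OM)
      \<le> (\<integral>\<^sup>+\<omega>. ennreal ((norm (v \<omega>))\<^sup>2) \<partial>OM) + ennreal s + ennreal (real (card K) * s)"
    unfolding eqsum using IH step by (meson add_right_mono order_trans)
  also have "\<dots> = (\<integral>\<^sup>+\<omega>. ennreal ((norm (v \<omega>))\<^sup>2) \<partial>OM) + ennreal (real (card (insert q K)) * s)"
    using insert.hyps \<open>s \<ge> 0\<close> by (simp add: ennreal_plus[symmetric] add.assoc algebra_simps del: ennreal_plus)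
  finally show ?case .
qed

lemma L2_mix:
  fixes F :: "('n \<times> nat \<Rightarrow> 's) \<Rightarrow> 'n \<Rightarrow> 'a"
  shows "(\<And>j. L2 OM (\<lambda>\<omega>. F \<omega> j)) \<Longrightarrow> L2 OM (\<lambda>\<omega>. mix Wb (F \<omega>) i)"
proof -
  assume h: "\<And>j. L2 OM (\<lambda>\<omega>. F \<omega> j)"
  show ?thesis unfolding mix_def
    using L2_sum[OF prob_OM, of UNIV "\<lambda>j \<omega>. Wb$i$j *\<^sub>R F \<omega> j"] L2_scale[OF h] by auto
qed

lemma state_L2:
  "\<forall>i. L2 OM (\<lambda>\<omega>. xit Wb \<gamma> \<beta> g x0 \<omega> t i) \<and> L2 OM (\<lambda>\<omega>. yit Wb \<gamma> \<beta> g x0 \<omega> t i)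
     \<and> L2 OM (\<lambda>\<omega>. zit Wb \<gamma> \<beta> g x0 \<omega> t i) \<and> L2 OM (\<lambda>\<omega>. Sit Wb \<gamma> \<beta> g x0 \<omega> t i)"
proof (induction t)
  case 0
  have c: "L2 OM (\<lambda>\<omega>. x0 i)" for i by (rule L2_const[OF prob_OM])
  have y: "L2 OM (\<lambda>\<omega>. gradG g x0 \<omega> 0 i)" for i
    unfolding gradG_def by (rule L2_grad[OF c]) simp
  show ?case using c y by (simp add: comp_0)
next
  case (Suc t)
  note IH = Suc.IH[rule_format]
  have X: "L2 OM (\<lambda>\<omega>. xit Wb \<gamma> \<beta> g x0 \<omega> (Suc t) i)" for i
  proof (cases "\<beta> dvd Suc t")
    case True
    then show ?thesis using IH by (simp add: comp_Suc L2_mix L2_diff L2_scale)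
  next
    case False
    then show ?thesis using IH by (simp add: comp_Suc L2_diff L2_scale)
  qed
  have G1: "L2 OM (\<lambda>\<omega>. gradG g (xit Wb \<gamma> \<beta> g x0 \<omega> (Suc t)) \<omega> (Suc t) i)" for i
    unfolding gradG_def
  proof (rule L2_grad[OF X])
    fix \<omega> y show "xit Wb \<gamma> \<beta> g x0 (fun_upd \<omega> (i, Suc t) y) (Suc t) i = xit Wb \<gamma> \<beta> g x0 \<omega> (Suc t) i"
      by (subst xit_dep[where \<omega>'=\<omega>]) (auto simp: upd_agree)
  qed
  have G2: "L2 OM (\<lambda>\<omega>. gradG g (zit Wb \<gamma> \<beta> g x0 \<omega> t) \<omega> t' i)" if "t' = t \<or> t' = Suc t" for i t'
    unfolding gradG_def
  proof (rule L2_grad)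
    show "L2 OM (\<lambda>\<omega>. zit Wb \<gamma> \<beta> g x0 \<omega> t i)" using IH by simp
    fix \<omega> y show "zit Wb \<gamma> \<beta> g x0 (fun_upd \<omega> (i, t') y) t i = zit Wb \<gamma> \<beta> g x0 \<omega> t i"
      using that by (subst zit_dep[where \<omega>'=\<omega>]) (auto simp: upd_agree)
  qed
  have Y: "L2 OM (\<lambda>\<omega>. yit Wb \<gamma> \<beta> g x0 \<omega> (Suc t) i)" for i
  proof (cases "\<beta> dvd Suc t")
    case True
    then show ?thesis using IH G1 G2 by (simp add: comp_Suc L2_mix L2_diff L2_add)
  next
    case False
    then show ?thesis using IH G2 by (simp add: comp_Suc L2_diff L2_add)
  qed
  have Z: "L2 OM (\<lambda>\<omega>. zit Wb \<gamma> \<beta> g x0 \<omega> (Suc t) i)" for i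
    by (cases "\<beta> dvd Suc t") (use IH X in \<open>simp_all add: comp_Suc[of Wb \<gamma> \<beta> g x0 _ t]\<close>)
  have S: "L2 OM (\<lambda>\<omega>. Sit Wb \<gamma> \<beta> g x0 \<omega> (Suc t) i)" for i
  proof (cases "\<beta> dvd Suc t")
    case True
    then show ?thesis using Y by (simp add: comp_Suc(4))
  next
    case False
    then show ?thesis using IH Y by (simp add: comp_Suc(4) L2_add)
  qed
  show ?case using X Y Z S by blast
qed

lemma round_bound:
  fixes f :: "'n \<Rightarrow> 'a \<Rightarrow> real" and Wb :: "real^'n^'n" and x0 :: "'n \<Rightarrow> 'a"
    and \<gamma> \<mu> :: real and \<beta> k :: nat and xs :: 'a
  defines "F \<equiv> (\<lambda>y. (1 / real CARD('n)) * (\<Sum>i\<in>UNIV. f i y))"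
  assumes grad: "\<And>i x. (f i has_derivative (\<lambda>h. df i x \<bullet> h)) (at x)"
    and mu: "\<mu> \<ge> 0"
    and sc: "\<And>i x x'. f i x' - f i x \<ge> df i x \<bullet> (x' - x) + \<mu> / 2 * (norm (x' - x))\<^sup>2"
    and minimizer: "\<And>y. F xs \<le> F y"
    and cs: "colsum1 Wb" and b: "\<beta> \<ge> 1" and gam: "\<gamma> > 0" and Lpos: "L > 0"
    and aL: "\<gamma> * real \<beta> * L \<le> 1 / 4"
  shows "(\<integral>\<omega>. (norm (node_avg (xit Wb \<gamma> \<beta> g x0 \<omega> (\<beta> * (k + 1))) - xs))\<^sup>2 \<partial>OM)
     \<le> (1 - \<mu> * real \<beta> * \<gamma> / 2) * (\<integral>\<omega>. (norm (node_avg (xit Wb \<gamma> \<beta> g x0 \<omega> (\<beta> * k)) - xs))\<^sup>2 \<partial>OM)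
       + \<gamma>\<^sup>2 * real \<beta> * \<sigma>\<^sup>2 / real CARD('n)
       + 3 * \<gamma> * real \<beta> * L / real CARD('n) * (\<integral>\<omega>. consensus_err (xit Wb \<gamma> \<beta> g x0 \<omega> (\<beta> * k)) \<partial>OM)
       - \<gamma> * real \<beta> * (\<integral>\<omega>. F (node_avg (xit Wb \<gamma> \<beta> g x0 \<omega> (\<beta> * k))) - F xs \<partial>OM)"
proof -
  interpret P: prob_space OM by (rule prob_OM)
  define N where "N = real CARD('n)"
  have N: "N > 0" by (simp add: N_def)
  define T0 where "T0 = \<beta> * k"
  define x where "x \<omega> = xit Wb \<gamma> \<beta> g x0 \<omega> T0" for \<omega>
  define a where "a = \<gamma> * real \<beta>"
  have a: "a > 0" using gam b by (simp add: a_def)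
  have aL': "a * L \<le> 1 / 4" using aL by (simp add: a_def)
  define Ts where "Ts = (\<lambda>l. T0 + l) ` {..<\<beta>}"
  define B where "B = (UNIV :: 'n set) \<times> Ts"
  have finB: "finite B" by (simp add: B_def Ts_def)
  have cardTs: "card Ts = \<beta>" unfolding Ts_def by (subst card_image) (auto simp: inj_on_def)
  have cardB: "card B = CARD('n) * \<beta>" by (simp add: B_def card_cartesian_product cardTs)
  have Lx: "L2 OM (\<lambda>\<omega>. x \<omega> i)" for i using state_L2[of Wb \<gamma> \<beta> x0 T0] unfolding x_def by blast
  have xm[measurable]: "(\<lambda>\<omega>. x \<omega> i) \<in> borel_measurable OM" for i using Lx by (simp add: L2_def)
  have xind: "x (fun_upd \<omega> q y) = x \<omega>" if "q \<in> B" for \<omega> q y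
    unfolding x_def by (rule xit_dep) (use that in \<open>auto simp: B_def Ts_def\<close>)
  have dfc: "continuous_on UNIV (df i)" for i
    by (rule lipschitz_on_continuous_on[OF lipschitz_onI[of UNIV "df i" L]]) (use smooth Lnn in \<open>auto simp: dist_norm\<close>)
  have dfm[measurable]: "df i \<in> borel_measurable borel" for i by (rule borel_measurable_continuous_onI[OF dfc])
  have fc: "continuous_on UNIV (f i)" for i
    by (rule continuous_at_imp_continuous_on) (use has_derivative_continuous[OF grad] in blast)
  have fm[measurable]: "f i \<in> borel_measurable borel" for i by (rule borel_measurable_continuous_onI[OF fc])
  have Fm[measurable]: "F \<in> borel_measurable borel" unfolding F_def by measurable
  define xb where "xb \<omega> = node_avg (x \<omega>)" for \<omega>
  have xbL: "L2 OM xb"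
  proof -
    have "L2 OM (\<lambda>\<omega>. (1 / real CARD('n)) *\<^sub>R (\<Sum>i\<in>UNIV. x \<omega> i))"
      by (intro L2_scale L2_sum[OF prob_OM] Lx) auto
    then show ?thesis by (simp add: xb_def[abs_def] node_avg_def)
  qed
  have xbm[measurable]: "xb \<in> borel_measurable OM" using xbL by (simp add: L2_def)
  define hh where "hh \<omega> = node_avg (\<lambda>i. df i (x \<omega> i))" for \<omega>
  have hhm[measurable]: "hh \<in> borel_measurable OM" unfolding hh_def node_avg_def by measurable
  define v where "v \<omega> = xb \<omega> - xs - a *\<^sub>R hh \<omega>" for \<omega>
  have vm[measurable]: "v \<in> borel_measurable OM" unfolding v_def by measurable
  define U :: "'n \<times> nat \<Rightarrow> 's \<Rightarrow> ('n \<times> nat \<Rightarrow> 's) \<Rightarrow> 'a" where "U q y \<omega> = (- (\<gamma> / N)) *\<^sub>R (g (fst q) (x \<omega> (fst q)) y - df (fst q) (x \<omega> (fst q)))" for q y \<omega>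
  have gL: "L2 OM (\<lambda>\<omega>. g i (x \<omega> i) (\<omega> (i, t)))" if "(i, t) \<in> B" for i t
    by (rule L2_grad[OF Lx]) (use xind[OF that] in simp)
  have Um: "(\<lambda>\<omega>. U q (\<omega> q) \<omega>) \<in> borel_measurable OM" if "q \<in> B" for q
  proof -
    obtain i t where q: "q = (i, t)" by (cases q)
    have [measurable]: "(\<lambda>\<omega>. g i (x \<omega> i) (\<omega> (i, t))) \<in> borel_measurable OM"
      using gL[of i t] that q by (simp add: L2_def)
    show ?thesis unfolding U_def q fst_conv by measurable
  qed
  have ident: "node_avg (xit Wb \<gamma> \<beta> g x0 \<omega> (\<beta> * (k + 1))) - xs = v \<omega> + (\<Sum>q\<in>B. U q (\<omega> q) \<omega>)" for \<omega>
  proof -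
    define S1 where "S1 = (\<Sum>i\<in>UNIV. \<Sum>t\<in>Ts. g i (x \<omega> i) (\<omega> (i, t)))"
    define Sd where "Sd = (\<Sum>i\<in>UNIV. df i (x \<omega> i))"
    have avg: "node_avg (xit Wb \<gamma> \<beta> g x0 \<omega> (\<beta> * (k + 1))) = xb \<omega> - \<gamma> *\<^sub>R (\<Sum>l<\<beta>. node_avg (gradG g (x \<omega>) \<omega> (T0 + l)))"
      using flexgt_avg_next[OF cs b, of \<gamma> g x0 \<omega> k] by (simp add: xb_def x_def T0_def)
    have reidx: "(\<Sum>t\<in>Ts. \<phi> t) = (\<Sum>l<\<beta>. \<phi> (T0 + l))" for \<phi> :: "nat \<Rightarrow> 'a"
      unfolding Ts_def by (subst sum.reindex) (auto simp: inj_on_def)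
    have s1: "(\<Sum>l<\<beta>. node_avg (gradG g (x \<omega>) \<omega> (T0 + l))) = (1 / N) *\<^sub>R S1"
    proof -
      have "(\<Sum>l<\<beta>. node_avg (gradG g (x \<omega>) \<omega> (T0 + l))) = (\<Sum>l<\<beta>. (1 / N) *\<^sub>R (\<Sum>i\<in>UNIV. g i (x \<omega> i) (\<omega> (i, T0 + l))))"
        by (simp add: node_avg_def gradG_def N_def)
      also have "\<dots> = (1 / N) *\<^sub>R (\<Sum>i\<in>UNIV. \<Sum>l<\<beta>. g i (x \<omega> i) (\<omega> (i, T0 + l)))"
        by (simp add: scaleR_sum_right[symmetric] sum.swap[of _ "{..<\<beta>}"])
      also have "\<dots> = (1 / N) *\<^sub>R S1" by (simp add: S1_def reidx)
      finally show ?thesis .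
    qed
    have s2: "(\<Sum>q\<in>B. U q (\<omega> q) \<omega>) = (- (\<gamma> / N)) *\<^sub>R (S1 - real \<beta> *\<^sub>R Sd)"
    proof -
      have "(\<Sum>q\<in>B. U q (\<omega> q) \<omega>) = (\<Sum>i\<in>UNIV. \<Sum>t\<in>Ts. U (i, t) (\<omega> (i, t)) \<omega>)"
        unfolding B_def by (simp add: sum.cartesian_product)
      also have "\<dots> = (\<Sum>i\<in>UNIV. (- (\<gamma> / N)) *\<^sub>R ((\<Sum>t\<in>Ts. g i (x \<omega> i) (\<omega> (i, t))) - real \<beta> *\<^sub>R df i (x \<omega> i)))"
      proof (rule sum.cong[OF refl])
        fix i
        have "(\<Sum>t\<in>Ts. U (i, t) (\<omega> (i, t)) \<omega>) = (- (\<gamma> / N)) *\<^sub>R (\<Sum>t\<in>Ts. g i (x \<omega> i) (\<omega> (i, t)) - df i (x \<omega> i))"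
          unfolding U_def fst_conv by (rule scaleR_sum_right[symmetric])
        also have "(\<Sum>t\<in>Ts. g i (x \<omega> i) (\<omega> (i, t)) - df i (x \<omega> i)) = (\<Sum>t\<in>Ts. g i (x \<omega> i) (\<omega> (i, t))) - real \<beta> *\<^sub>R df i (x \<omega> i)"
          by (simp add: sum_subtractf sum_constant_scaleR cardTs)
        finally show "(\<Sum>t\<in>Ts. U (i, t) (\<omega> (i, t)) \<omega>) = (- (\<gamma> / N)) *\<^sub>R ((\<Sum>t\<in>Ts. g i (x \<omega> i) (\<omega> (i, t))) - real \<beta> *\<^sub>R df i (x \<omega> i))" .
      qed
      also have "\<dots> = (- (\<gamma> / N)) *\<^sub>R (S1 - real \<beta> *\<^sub>R Sd)"
        by (simp only: S1_def Sd_def sum_negf scaleR_sum_right[symmetric] sum_subtractf)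
      finally show ?thesis .
    qed
    have hhS: "hh \<omega> = (1 / N) *\<^sub>R Sd" by (simp add: hh_def node_avg_def Sd_def N_def)
    show ?thesis
      unfolding avg s1 s2 v_def hhS a_def using N
      by (simp add: algebra_simps scaleR_diff_right)
  qed
  define s where "s = (\<gamma> / N)\<^sup>2 * \<sigma>\<^sup>2"
  have s0: "s \<ge> 0" by (simp add: s_def)
  have iterK: "(\<integral>\<^sup>+\<omega>. ennreal ((norm (v \<omega> + (\<Sum>q\<in>B. U q (\<omega> q) \<omega>)))\<^sup>2) \<partial>OM)
      \<le> (\<integral>\<^sup>+\<omega>. ennreal ((norm (v \<omega>))\<^sup>2) \<partial>OM) + ennreal (real (card B) * s)"
  proof -
    have h1: "v (fun_upd \<omega> q y) = v \<omega>" if "q \<in> B" for \<omega> q y using that by (simp add: v_def xb_def hh_def xind)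
    have h3: "U q y (fun_upd \<omega> q' y') = U q y \<omega>" if "q \<in> B" "q' \<in> B" for q q' \<omega> y y'
      using that by (simp add: U_def xind)
    have h4: "(\<integral>\<^sup>+y. ennreal ((norm (w + U q y \<omega>))\<^sup>2) \<partial>((\<lambda>(i::'n, t::nat). D i) q)) \<le> ennreal ((norm w)\<^sup>2 + s)"
      if "q \<in> B" for q \<omega> w
    proof -
      obtain i t where q: "q = (i, t)" by (cases q)
      show ?thesis
        using inner_step[where w=w and c="- (\<gamma> / N)" and i=i and x="x \<omega> i"] by (simp add: U_def q s_def)
    qed
    show ?thesis by (rule iter_K[where U=U and v=v, OF finB s0 vm h1 Um h3 h4])
  qed
  define R where "R \<omega> = (1 - \<mu> * a / 2) * (norm (xb \<omega> - xs))\<^sup>2 + 3 * a * L / N * consensus_err (x \<omega>) - a * (F (xb \<omega>) - F xs)" for \<omega>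
  have det: "(norm (v \<omega>))\<^sup>2 \<le> R \<omega>" for \<omega>
    using det_bound[OF grad mu sc smooth minimizer[unfolded F_def] Lpos a aL', where x="x \<omega>"]
    by (simp add: v_def xb_def hh_def R_def N_def F_def)
  have R0: "R \<omega> \<ge> 0" for \<omega> using det[of \<omega>] by (meson order_trans zero_le_power2)
  have xbL': "L2 OM (\<lambda>\<omega>. xb \<omega> - xs)" by (rule L2_diff[OF xbL L2_const[OF prob_OM]])
  have I1: "integrable OM (\<lambda>\<omega>. (norm (xb \<omega> - xs))\<^sup>2)" using xbL' by (simp add: L2_def)
  have I2: "integrable OM (\<lambda>\<omega>. consensus_err (x \<omega>))"
  proof -
    have "integrable OM (\<lambda>\<omega>. \<Sum>i\<in>UNIV. (norm (x \<omega> i - xb \<omega>))\<^sup>2)"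
      by (intro Bochner_Integration.integrable_sum) (use L2_diff[OF Lx xbL] in \<open>simp add: L2_def\<close>)
    then show ?thesis by (simp add: consensus_err_def xb_def)
  qed
  define Gs where "Gs = node_avg (\<lambda>i. df i xs)"
  have Fup: "F y - F xs \<le> norm Gs * norm (y - xs) + L / 2 * (norm (y - xs))\<^sup>2" for y
  proof -
    have d: "f i y \<le> f i xs + df i xs \<bullet> (y - xs) + L / 2 * (norm (y - xs))\<^sup>2" for i
      by (rule descent[OF grad smooth])
    have "(\<Sum>i\<in>UNIV. f i y) \<le> (\<Sum>i\<in>UNIV. f i xs + df i xs \<bullet> (y - xs) + L / 2 * (norm (y - xs))\<^sup>2)"
      by (rule sum_mono) (rule d)
    also have "\<dots> = (\<Sum>i\<in>UNIV. f i xs) + N * (Gs \<bullet> (y - xs)) + N * (L / 2 * (norm (y - xs))\<^sup>2)"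
      using N by (simp add: sum.distrib Gs_def node_avg_def N_def inner_sum_left)
    finally have "F y \<le> F xs + Gs \<bullet> (y - xs) + L / 2 * (norm (y - xs))\<^sup>2"
      using N unfolding F_def N_def by (simp add: field_simps)
    moreover have "Gs \<bullet> (y - xs) \<le> norm Gs * norm (y - xs)" by (rule norm_cauchy_schwarz)
    ultimately show ?thesis by linarith
  qed
  have I3: "integrable OM (\<lambda>\<omega>. F (xb \<omega>) - F xs)"
  proof (rule Bochner_Integration.integrable_bound)
    show "integrable OM (\<lambda>\<omega>. norm Gs * norm (xb \<omega> - xs) + L / 2 * (norm (xb \<omega> - xs))\<^sup>2)"
      using L2_integrable_norm[OF prob_OM xbL'] I1 by auto
    show "(\<lambda>\<omega>. F (xb \<omega>) - F xs) \<in> borel_measurable OM" by measurable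
    show "AE \<omega> in OM. norm (F (xb \<omega>) - F xs) \<le> norm (norm Gs * norm (xb \<omega> - xs) + L / 2 * (norm (xb \<omega> - xs))\<^sup>2)"
    proof (intro AE_I2)
      fix \<omega>
      have "0 \<le> F (xb \<omega>) - F xs" using minimizer[of "xb \<omega>"] by simp
      moreover have "0 \<le> norm Gs * norm (xb \<omega> - xs) + L / 2 * (norm (xb \<omega> - xs))\<^sup>2" using Lpos by simp
      ultimately show "norm (F (xb \<omega>) - F xs) \<le> norm (norm Gs * norm (xb \<omega> - xs) + L / 2 * (norm (xb \<omega> - xs))\<^sup>2)"
        using Fup[of "xb \<omega>"] by simp
    qed
  qed
  have IR: "integrable OM R" unfolding R_def[abs_def] using I1 I2 I3 by auto
  have intR: "(\<integral>\<omega>. R \<omega> \<partial>OM) = (1 - \<mu> * a / 2) * (\<integral>\<omega>. (norm (xb \<omega> - xs))\<^sup>2 \<partial>OM)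
      + 3 * a * L / N * (\<integral>\<omega>. consensus_err (x \<omega>) \<partial>OM) - a * (\<integral>\<omega>. F (xb \<omega>) - F xs \<partial>OM)"
    unfolding R_def using I1 I2 I3 by simp
  have Sm: "(\<lambda>\<omega>. \<Sum>q\<in>B. U q (\<omega> q) \<omega>) \<in> borel_measurable OM"
    by (rule borel_measurable_sum) (rule Um)
  have LHSm: "(\<lambda>\<omega>. (norm (node_avg (xit Wb \<gamma> \<beta> g x0 \<omega> (\<beta> * (k + 1))) - xs))\<^sup>2) \<in> borel_measurable OM"
    unfolding ident using Sm vm by measurable
  have "(\<integral>\<omega>. (norm (node_avg (xit Wb \<gamma> \<beta> g x0 \<omega> (\<beta> * (k + 1))) - xs))\<^sup>2 \<partial>OM)
      = enn2real (\<integral>\<^sup>+\<omega>. ennreal ((norm (node_avg (xit Wb \<gamma> \<beta> g x0 \<omega> (\<beta> * (k + 1))) - xs))\<^sup>2) \<partial>OM)"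
    by (rule integral_eq_nn_integral[OF LHSm]) auto
  also have "\<dots> \<le> (\<integral>\<omega>. R \<omega> \<partial>OM) + real (card B) * s"
  proof (rule enn2real_leI)
    show "0 \<le> (\<integral>\<omega>. R \<omega> \<partial>OM) + real (card B) * s" using R0 s0 by (simp add: integral_nonneg)
    have "(\<integral>\<^sup>+\<omega>. ennreal ((norm (node_avg (xit Wb \<gamma> \<beta> g x0 \<omega> (\<beta> * (k + 1))) - xs))\<^sup>2) \<partial>OM)
        = (\<integral>\<^sup>+\<omega>. ennreal ((norm (v \<omega> + (\<Sum>q\<in>B. U q (\<omega> q) \<omega>)))\<^sup>2) \<partial>OM)" by (simp only: ident)
    also have "\<dots> \<le> (\<integral>\<^sup>+\<omega>. ennreal ((norm (v \<omega>))\<^sup>2) \<partial>OM) + ennreal (real (card B) * s)" by (rule iterK)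
    also have "\<dots> \<le> (\<integral>\<^sup>+\<omega>. ennreal (R \<omega>) \<partial>OM) + ennreal (real (card B) * s)"
      by (intro add_right_mono nn_integral_mono ennreal_leI det)
    also have "(\<integral>\<^sup>+\<omega>. ennreal (R \<omega>) \<partial>OM) = ennreal (\<integral>\<omega>. R \<omega> \<partial>OM)"
      by (rule nn_integral_eq_integral[OF IR]) (use R0 in auto)
    also have "ennreal (\<integral>\<omega>. R \<omega> \<partial>OM) + ennreal (real (card B) * s) = ennreal ((\<integral>\<omega>. R \<omega> \<partial>OM) + real (card B) * s)"
      using R0 s0 by (simp add: integral_nonneg ennreal_plus)
    finally show "(\<integral>\<^sup>+\<omega>. ennreal ((norm (node_avg (xit Wb \<gamma> \<beta> g x0 \<omega> (\<beta> * (k + 1))) - xs))\<^sup>2) \<partial>OM)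
        \<le> ennreal ((\<integral>\<omega>. R \<omega> \<partial>OM) + real (card B) * s)" .
  qed
  also have "real (card B) * s = \<gamma>\<^sup>2 * real \<beta> * \<sigma>\<^sup>2 / real CARD('n)"
    using N by (simp add: cardB s_def N_def power2_eq_square field_simps)
  finally show ?thesis
    unfolding intR by (simp add: xb_def x_def T0_def a_def N_def mult.commute mult.left_commute)
qed

end


theorem lemma2:
  fixes f :: "'n::finite \<Rightarrow> 'a::euclidean_space \<Rightarrow> real"
    and df :: "'n \<Rightarrow> 'a \<Rightarrow> 'a"
    and g :: "'n \<Rightarrow> 'a \<Rightarrow> 's \<Rightarrow> 'a"
    and D :: "'n \<Rightarrow> 's measure"
    and W :: "real^'n^'n"
    and acc :: bool
    and \<alpha> \<beta> :: nat
    and \<gamma> \<mu> L \<sigma> :: real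
    and x0 :: "'n \<Rightarrow> 'a"
    and xstar :: 'a
  defines "Favg \<equiv> (\<lambda>x. (1 / real CARD('n)) * (\<Sum>i\<in>UNIV. f i x))"
    and "\<Omega> \<equiv> Pi\<^sub>M UNIV (\<lambda>(i::'n, t::nat). D i)"
    and "X \<equiv> (\<lambda>t \<omega>. xit (Wbar acc W \<alpha>) \<gamma> \<beta> g x0 \<omega> t)"
  assumes grad: "\<And>i x. (f i has_derivative (\<lambda>h. df i x \<bullet> h)) (at x)"
    and strong_conv: "\<mu> \<ge> 0"
      "\<And>i x x'. f i x' - f i x \<ge> df i x \<bullet> (x' - x) + \<mu> / 2 * (norm (x' - x))\<^sup>2"
    and smooth: "\<And>i x y. norm (df i x - df i y) \<le> L * norm (x - y)"
    and prob: "\<And>i. prob_space (D i)"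
    and meas: "\<And>i. (\<lambda>(x, s). g i x s) \<in> borel_measurable (borel \<Otimes>\<^sub>M D i)"
    and unbiased: "\<And>i x. integrable (D i) (g i x) \<and> (\<integral>s. g i x s \<partial>D i) = df i x"
    and variance: "\<And>i x. (\<integral>\<^sup>+s. ennreal ((norm (g i x s - df i x))\<^sup>2) \<partial>D i) \<le> ennreal (\<sigma>\<^sup>2)"
    and graph: "doubly_stochastic W" "rhoW W < 1"
    and minimizer: "\<And>x. Favg xstar \<le> Favg x"
    and params: "\<alpha> \<ge> 1" "\<beta> \<ge> 1" "\<gamma> > 0" "\<gamma> \<le> 1 / (4 * real \<beta> * L)"
  shows "\<forall>k. (\<integral>\<omega>. (norm (node_avg (X (\<beta> * (k + 1)) \<omega>) - xstar))\<^sup>2 \<partial>\<Omega>)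
     \<le> (1 - \<mu> * real \<beta> * \<gamma> / 2) * (\<integral>\<omega>. (norm (node_avg (X (\<beta> * k) \<omega>) - xstar))\<^sup>2 \<partial>\<Omega>)
       + \<gamma>\<^sup>2 * real \<beta> * \<sigma>\<^sup>2 / real CARD('n)
       + 3 * \<gamma> * real \<beta> * L / real CARD('n) * (\<integral>\<omega>. consensus_err (X (\<beta> * k) \<omega>) \<partial>\<Omega>)
       - \<gamma> * real \<beta> * (\<integral>\<omega>. Favg (node_avg (X (\<beta> * k) \<omega>)) - Favg xstar \<partial>\<Omega>)"
proof -
  have Lpos: "L > 0"
  proof (rule ccontr)
    assume "\<not> L > 0"
    then have "4 * real \<beta> * L \<le> 0" by (simp add: mult_nonneg_nonpos)
    then have "1 / (4 * real \<beta> * L) \<le> 0" using divide_nonneg_nonpos[of 1 "4 * real \<beta> * L"] by simp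
    then show False using params(3,4) by linarith
  qed
  have aL: "\<gamma> * real \<beta> * L \<le> 1 / 4"
  proof -
    have pos: "4 * real \<beta> * L > 0" using params(2) Lpos by simp
    have "\<gamma> * (4 * real \<beta> * L) \<le> 1 / (4 * real \<beta> * L) * (4 * real \<beta> * L)"
      using params(4) pos by (intro mult_right_mono) auto
    moreover have "1 / (4 * real \<beta> * L) * (4 * real \<beta> * L) = 1" using pos by (metis divide_self_if less_irrefl times_divide_eq_left mult_1)
    moreover have "\<gamma> * real \<beta> * L = (\<gamma> * (4 * real \<beta> * L)) / 4" by simp
    ultimately show ?thesis by linarith
  qed
  have cs: "colsum1 (Wbar acc W \<alpha>)" by (rule colsum1_Wbar[OF graph(1)])
  show ?thesis
  proof
    fix k
    show "(\<integral>\<omega>. (norm (node_avg (X (\<beta> * (k + 1)) \<omega>) - xstar))\<^sup>2 \<partial>\<Omega>)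
     \<le> (1 - \<mu> * real \<beta> * \<gamma> / 2) * (\<integral>\<omega>. (norm (node_avg (X (\<beta> * k) \<omega>) - xstar))\<^sup>2 \<partial>\<Omega>)
       + \<gamma>\<^sup>2 * real \<beta> * \<sigma>\<^sup>2 / real CARD('n)
       + 3 * \<gamma> * real \<beta> * L / real CARD('n) * (\<integral>\<omega>. consensus_err (X (\<beta> * k) \<omega>) \<partial>\<Omega>)
       - \<gamma> * real \<beta> * (\<integral>\<omega>. Favg (node_avg (X (\<beta> * k) \<omega>)) - Favg xstar \<partial>\<Omega>)"
      unfolding X_def \<Omega>_def Favg_def
      by (rule round_bound[OF prob meas unbiased variance smooth less_imp_le[OF Lpos] grad strong_conv(1,2)
            minimizer[unfolded Favg_def] cs params(2,3) Lpos aL])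
  qed
qed

end
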